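(* Let $\widetilde W=\widetilde W_H$ or $\widetilde W_L$, and let $\mathcal A=\sum_{j=0}^{2m}\partial^jF_j$ be a differential operator of order $2m$ in $\mathcal D(\widetilde W)$. Then there are $c_1,\dots,c_N\in\mathbb C$ and polynomials $q_1,\dots,q_N$ of degree less than $m$ such that $F_{2m}(x)=\mathrm{diag}(c_1\rho(x)^m,\dots,c_N\rho(x)^m)$, $F_m(x)=\mathrm{diag}(c_1(-2)^mx^m+q_1(x),\dots,c_N(-2)^mx^m+q_N(x))$ if $\widetilde W=\widetilde W_H$, and $F_m(x)=\mathrm{diag}(c_1(-1)^mx^m+q_1(x),\dots,c_N(-1)^mx^m+q_N(x))$ if $\widetilde W=\widetilde W_L$; moreover $\deg F_j<j$ for $m+1\le j\le 2m$.
   Context: $\widetilde W_H=\mathrm{diag}(e^{-x^2+2b_1x},\dots,e^{-x^2+2b_Nx})$ on $\mathbb R$ with $b_i$ pairwise distinct reals, and $\rho(x)=1$; $\widetilde W_L=\mathrm{diag}(e^{-x}x^{\alpha_1},\dots,e^{-x}x^{\alpha_N})$ on $(0,\infty)$ with $\alpha_i>-1$ and $\alpha_i-\alpha_j\notin\mathbb Z$ for $i\ne j$, and $\rho(x)=x$. For a weight matrix $W$ with monic orthogonal polynomials $P_n$ (w.r.t. $\langle P,Q\rangle=\int PWQ^*dx$), $\mathcal D(W)$ is the algebra of differential operators $D=\sum_j\partial^jF_j$ with matrix polynomial coefficients, acting on the right by $P\cdot D=\sum_j\partial^j(P)F_j$, such that $P_n\cdot D=\Lambda_n(D)P_n$ for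 all $n\ge0$ with constant matrices $\Lambda_n(D)$. *)

theory Defs
  imports "HOL-Analysis.Analysis" "HOL-Computational_Algebra.Polynomial"
begin

text \<open>N x N matrix polynomials are represented as complex poly ^'n^'n, with 'n a finite
  index type (N = CARD('n)).\<close>

type_synonym 'n mpoly = "complex poly ^'n^'n"

definition mat_eval :: "'n::finite mpoly \<Rightarrow> complex \<Rightarrow> complex^'n^'n" where
  "mat_eval P z = (\<chi> i j. poly (P$i$j) z)"

definition mat_deriv :: "'n::finite mpoly \<Rightarrow> 'n mpoly" where
  "mat_deriv P = (\<chi> i j. pderiv (P$i$j))"

definition const_mpoly :: "complex^'n^'n \<Rightarrow> 'n::finite mpoly" where
  "const_mpoly L = (\<chi> i j. [:L$i$j:])"

definition monic_mpoly :: "nat \<Rightarrow> 'n::finite mpoly \<Rightarrow> bool" where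
  "monic_mpoly n P \<longleftrightarrow> (\<forall>i j. degree (P$i$j) \<le> n \<and> coeff (P$i$j) n = (if i = j then 1 else 0))"

text \<open>Inner product for a diagonal weight W = diag(w_k) supported on S:
  <P,Q> = integral over S of P(x) W(x) Q(x)^* dx.\<close>
definition mip :: "real set \<Rightarrow> ('n \<Rightarrow> real \<Rightarrow> real) \<Rightarrow> 'n::finite mpoly \<Rightarrow> 'n mpoly \<Rightarrow> complex^'n^'n" where
  "mip S w P Q = (\<chi> i j. LINT x:S|lborel.
      (\<Sum>k\<in>UNIV. poly (P$i$k) (complex_of_real x) * complex_of_real (w k x)
                   * cnj (poly (Q$j$k) (complex_of_real x))))"

definition monic_OPS :: "real set \<Rightarrow> ('n \<Rightarrow> real \<Rightarrow> real) \<Rightarrow> (nat \<Rightarrow> 'n::finite mpoly) \<Rightarrow> bool" where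
  "monic_OPS S w P \<longleftrightarrow> (\<forall>n. monic_mpoly n (P n) \<and> (\<forall>k. k \<noteq> n \<longrightarrow> mip S w (P n) (P k) = 0))"

definition dop_act :: "(nat \<Rightarrow> 'n::finite mpoly) \<Rightarrow> nat \<Rightarrow> 'n mpoly \<Rightarrow> 'n mpoly" where
  "dop_act F M P = (\<Sum>j\<le>M. ((mat_deriv ^^ j) P) ** F j)"

definition in_DW :: "(nat \<Rightarrow> 'n::finite mpoly) \<Rightarrow> (nat \<Rightarrow> 'n mpoly) \<Rightarrow> nat \<Rightarrow> bool" where
  "in_DW P F M \<longleftrightarrow> (\<forall>n. \<exists>L::complex^'n^'n. dop_act F M (P n) = const_mpoly L ** P n)"

definition wH :: "('n \<Rightarrow> real) \<Rightarrow> 'n \<Rightarrow> real \<Rightarrow> real" where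
  "wH b k x = exp (- x\<^sup>2 + 2 * b k * x)"

definition wL :: "('n \<Rightarrow> real) \<Rightarrow> 'n \<Rightarrow> real \<Rightarrow> real" where
  "wL a k x = exp (- x) * x powr (a k)"

definition diag_mpoly :: "('n \<Rightarrow> complex poly) \<Rightarrow> 'n::finite mpoly" where
  "diag_mpoly d = (\<chi> i j. if i = j then d i else 0)"

end

theory Submission
  imports Defs "HOL-Probability.Distributions" "HOL-Real_Asymp.Real_Asymp"
begin


definition act :: "(nat \<Rightarrow> complex poly) \<Rightarrow> nat \<Rightarrow> complex poly \<Rightarrow> complex poly" where
  "act f M q = (\<Sum>j\<le>M. (pderiv^^j) q * f j)"

definition hop :: "complex \<Rightarrow> complex poly \<Rightarrow> complex poly" where
  "hop c q = pderiv (pderiv q) + [:2*c, -2:] * pderiv q"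

definition lop :: "complex \<Rightarrow> complex poly \<Rightarrow> complex poly" where
  "lop c q = [:0, 1:] * pderiv (pderiv q) + [:c+1, -1:] * pderiv q"

lemma pd_Suc: "pderiv ((pderiv^^n) q) = (pderiv^^(Suc n)) q"
  by simp

lemma pd_in: "(pderiv^^n) (pderiv q) = (pderiv^^(Suc n)) q"
  by (simp add: funpow_Suc_right del: funpow.simps)

lemma hd_lin:
  "(pderiv^^j) ([:u,v:] * (pderiv^^(Suc k)) q) =
     [:u,v:] * (pderiv^^(Suc k + j)) q + smult (of_nat j * v) ((pderiv^^(k+j)) q)"
proof (induction j)
  case 0 then show ?case by simp
next
  case (Suc j)
  have "(pderiv^^(Suc j)) ([:u,v:] * (pderiv^^(Suc k)) q) =
        pderiv ((pderiv^^j) ([:u,v:] * (pderiv^^(Suc k)) q))" by simp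
  also have "\<dots> = pderiv ([:u,v:] * (pderiv^^(Suc k + j)) q + smult (of_nat j * v) ((pderiv^^(k+j)) q))"
    using Suc by simp
  also have "\<dots> = [:u,v:] * (pderiv^^(Suc (Suc k + j))) q + smult v ((pderiv^^(Suc k + j)) q)
        + smult (of_nat j * v) ((pderiv^^(Suc (k+j))) q)"
    by (simp add: pderiv_add pderiv_mult pderiv_smult pderiv_pCons del: funpow.simps)
       (simp add: algebra_simps)
  also have "\<dots> = [:u,v:] * (pderiv^^(Suc k + Suc j)) q + smult (of_nat (Suc j) * v) ((pderiv^^(k + Suc j)) q)"
    by (simp add: algebra_simps smult_add_left del: funpow.simps)
  finally show ?case .
qed

lemma reidx:
  fixes D X Y :: "nat \<Rightarrow> 'a::comm_ring_1"
  assumes "X (Suc M) = 0"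
  shows "(\<Sum>j\<le>M. D j * X j + D (Suc j) * Y j) =
         (\<Sum>j\<le>Suc M. D j * (X j + (if j = 0 then 0 else Y (j-1))))"
proof -
  have "(\<Sum>j\<le>Suc M. D j * (X j + (if j = 0 then 0 else Y (j-1)))) =
        (\<Sum>j\<le>Suc M. D j * X j) + (\<Sum>j\<le>Suc M. D j * (if j = 0 then 0 else Y (j-1)))"
    by (simp add: distrib_left sum.distrib)
  also have "(\<Sum>j\<le>Suc M. D j * X j) = (\<Sum>j\<le>M. D j * X j)"
    using assms by simp
  also have "(\<Sum>j\<le>Suc M. D j * (if j = 0 then 0 else Y (j-1))) = (\<Sum>j\<le>M. D (Suc j) * Y j)"
    by (subst sum.atMost_Suc_shift) simp
  finally show ?thesis by (simp add: sum.distrib)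
qed

lemma higher_pderiv_monom_same: "(pderiv^^j) (monom 1 j :: complex poly) = [:fact j:]"
  by (rule poly_eqI) (auto simp: coeff_higher_pderiv coeff_monom coeff_pCons pochhammer_fact split: nat.split)

lemma higher_pderiv_monom_gt: "j < i \<Longrightarrow> (pderiv^^i) (monom 1 j :: complex poly) = 0"
  by (rule poly_eqI) (auto simp: coeff_higher_pderiv coeff_monom)

lemma vanish:
  fixes e :: "nat \<Rightarrow> complex poly"
  assumes "\<And>q. (\<Sum>j\<le>N. (pderiv^^j) q * e j) = 0"
  shows "j \<le> N \<Longrightarrow> e j = 0"
proof (induction j rule: less_induct)
  case (less j)
  have "(\<Sum>i\<le>N. (pderiv^^i) (monom 1 j) * e i) = (\<Sum>i\<in>{j}. (pderiv^^i) (monom 1 j) * e i)"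
  proof (rule sum.mono_neutral_right)
    show "\<forall>i\<in>{..N} - {j}. (pderiv ^^ i) (monom 1 j) * e i = 0"
    proof
      fix i assume "i \<in> {..N} - {j}"
      then have "i < j \<or> j < i" "i \<le> N" by auto
      then show "(pderiv ^^ i) (monom 1 j) * e i = 0"
        using less.IH[of i] less.prems higher_pderiv_monom_gt[of j i] by auto
    qed
  qed (use less.prems in auto)
  then have "[:fact j:] * e j = 0"
    using assms[of "monom 1 j"] by (simp add: higher_pderiv_monom_same)
  then show ?case by simp
qed

lemma span_zero:
  fixes L :: "complex poly \<Rightarrow> complex poly" and p :: "nat \<Rightarrow> complex poly"
  assumes add: "\<And>a b. L (a + b) = L a + L b"
    and sm: "\<And>c a. L (smult c a) = smult c (L a)"
    and deg: "\<And>n. degree (p n) = n" and lc: "\<And>n. coeff (p n) n = 1"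
    and z: "\<And>n. L (p n) = 0"
  shows "L q = 0"
proof (induction "degree q" arbitrary: q rule: less_induct)
  case less
  define r where "r = q - smult (coeff q (degree q)) (p (degree q))"
  have qr: "q = r + smult (coeff q (degree q)) (p (degree q))" by (simp add: r_def)
  have L0: "L 0 = 0" using sm[of 0 0] by simp
  have cr: "coeff r (degree q) = 0" by (simp add: r_def lc)
  have dr: "degree r \<le> degree q" unfolding r_def
    by (rule degree_diff_le) (auto simp: deg)
  have "L r = 0"
  proof (cases "r = 0")
    case True then show ?thesis using L0 by simp
  next
    case False
    have "degree r \<noteq> degree q" using cr False by (metis leading_coeff_0_iff)
    then have "degree r < degree q" using dr by simp
    then show ?thesis using less by simp
  qed
  then show ?case by (subst qr, simp add: add sm z)
qed


lemma hop_add: "hop c (a + b) = hop c a + hop c b"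
  by (simp add: hop_def pderiv_add algebra_simps del: mult_pCons_left mult_pCons_right)
lemma hop_smult: "hop c (smult u a) = smult u (hop c a)"
  by (simp add: hop_def pderiv_smult smult_add_right del: mult_pCons_left mult_pCons_right)
lemma hop_sum: "hop c (sum g A) = (\<Sum>x\<in>A. hop c (g x))"
  by (induction A rule: infinite_finite_induct) (auto simp: hop_add hop_smult[of c 0, simplified])
lemma lop_add: "lop c (a + b) = lop c a + lop c b"
  by (simp add: lop_def pderiv_add algebra_simps del: mult_pCons_left mult_pCons_right)
lemma lop_smult: "lop c (smult u a) = smult u (lop c a)"
  by (simp add: lop_def pderiv_smult smult_add_right del: mult_pCons_left mult_pCons_right)
lemma lop_sum: "lop c (sum g A) = (\<Sum>x\<in>A. lop c (g x))"
  by (induction A rule: infinite_finite_induct) (auto simp: lop_add lop_smult[of c 0, simplified])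

lemma smult_sum_r: "smult u (sum g A) = (\<Sum>x\<in>A. smult u (g x))"
  by (induction A rule: infinite_finite_induct) (auto simp: smult_add_right)

lemma act_add: "act f M (a + b) = act f M a + act f M b"
  by (simp add: act_def higher_pderiv_add algebra_simps sum.distrib)
lemma act_smult: "act f M (smult u a) = smult u (act f M a)"
  by (simp add: act_def higher_pderiv_smult smult_sum_r mult_smult_left)

lemma hop_hd: "(pderiv^^j) (hop c q) =
   (pderiv^^(Suc (Suc j))) q + [:2*c,-2:] * (pderiv^^(Suc j)) q + smult (-2 * of_nat j) ((pderiv^^j) q)"
proof -
  have "(pderiv^^j) ([:2*c,-2:] * (pderiv^^(Suc 0)) q) =
     [:2*c,-2:] * (pderiv^^(Suc 0 + j)) q + smult (of_nat j * -2) ((pderiv^^(0+j)) q)"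
    by (rule hd_lin)
  then show ?thesis
    by (simp add: hop_def higher_pderiv_add pd_in del: funpow.simps) (simp add: mult.commute)
qed

lemma lop_hd: "(pderiv^^j) (lop c q) =
   [:0,1:] * (pderiv^^(Suc (Suc j))) q + smult (of_nat j) ((pderiv^^(Suc j)) q)
   + [:c+1,-1:] * (pderiv^^(Suc j)) q + smult (- of_nat j) ((pderiv^^j) q)"
proof -
  have 1: "(pderiv^^j) ([:0,1:] * (pderiv^^(Suc 1)) q) =
     [:0,1:] * (pderiv^^(Suc 1 + j)) q + smult (of_nat j * 1) ((pderiv^^(1+j)) q)"
    by (rule hd_lin)
  have 2: "(pderiv^^j) ([:c+1,-1:] * pderiv q) =
     [:c+1,-1:] * (pderiv^^(Suc j)) q + smult (- of_nat j) ((pderiv^^j) q)"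
    using hd_lin[of j "c+1" "-1" 0 q] by simp
  have e: "pderiv (pderiv q) = (pderiv^^(Suc 1)) q" by (simp add: numeral_2_eq_2)
  show ?thesis using 1 2
    by (simp add: lop_def higher_pderiv_add e del: funpow.simps mult_pCons_left mult_pCons_right) 
qed

definition he :: "complex \<Rightarrow> complex \<Rightarrow> (nat \<Rightarrow> complex poly) \<Rightarrow> nat \<Rightarrow> complex poly" where
  "he c c' f j = pderiv (pderiv (f j)) + [:2*c',-2:] * pderiv (f j) + smult (2 * of_nat j) (f j)
     + (if j = 0 then 0 else smult 2 (pderiv (f (j-1))) + smult (2*(c'-c)) (f (j-1)))"

definition le :: "complex \<Rightarrow> complex \<Rightarrow> (nat \<Rightarrow> complex poly) \<Rightarrow> nat \<Rightarrow> complex poly" where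
  "le c c' f j = [:0,1:] * pderiv (pderiv (f j)) + [:c'+1,-1:] * pderiv (f j) + smult (of_nat j) (f j)
     + (if j = 0 then 0 else smult 2 ([:0,1:] * pderiv (f (j-1))) + smult (c' - c - of_nat (j-1)) (f (j-1)))"

lemma hop_term_gen: fixes Dj D1 D2 g A B :: "complex poly"
  assumes "pderiv Dj = D1" "pderiv D1 = D2" "A = B + [:k:]"
  shows "(pderiv (pderiv (Dj * g)) + A * pderiv (Dj * g)) - (D2 + B * D1 + smult (-2 * of_nat j) Dj) * g
     = Dj * (pderiv (pderiv g) + A * pderiv g + smult (2 * of_nat j) g) + D1 * (smult 2 (pderiv g) + smult k g)"
proof -
  have c2: "[:2:] = (2::complex poly)" by (simp add: numeral_poly)
  have e1: "pderiv (pderiv (Dj * g)) = D2 * g + 2 * (D1 * pderiv g) + Dj * pderiv (pderiv g)"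
    using assms by (simp only: pderiv_mult pderiv_add) (simp add: algebra_simps mult_2 del: mult_pCons_left mult_pCons_right)
  have e2: "pderiv (Dj * g) = D1 * g + Dj * pderiv g"
    using assms by (simp only: pderiv_mult) (simp add: algebra_simps del: mult_pCons_left mult_pCons_right)
  have e3: "smult u X = [:u:] * X" for u and X :: "complex poly" by simp
  have e4: "[:-2 * of_nat j:] = - 2 * ([:of_nat j:] :: complex poly)" "[:2 * of_nat j:] = 2 * ([:of_nat j:] :: complex poly)"
    by (simp_all add: c2[symmetric])
  show ?thesis unfolding e1 unfolding e2 e3 e4 c2 assms(3) by (simp only: distrib_left distrib_right) algebra
qed

lemma hop_term:
  "hop c' ((pderiv^^j) q * g) - (pderiv^^j) (hop c q) * g =
   (pderiv^^j) q * (pderiv (pderiv g) + [:2*c',-2:] * pderiv g + smult (2 * of_nat j) g)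
   + (pderiv^^(Suc j)) q * (smult 2 (pderiv g) + smult (2*(c'-c)) g)"
  apply (subst hop_hd) apply (subst hop_def)
  by (rule hop_term_gen) (simp_all del: funpow.simps add: pd_Suc algebra_simps)

lemma lop_term_gen: fixes Dj D1 D2 g A B X1 :: "complex poly"
  assumes "pderiv Dj = D1" "pderiv D1 = D2" "A = B + [:k:]"
  shows "(X1 * pderiv (pderiv (Dj * g)) + A * pderiv (Dj * g)) - (X1 * D2 + smult (of_nat j) D1 + B * D1 + smult (- of_nat j) Dj) * g
     = Dj * (X1 * pderiv (pderiv g) + A * pderiv g + smult (of_nat j) g) + D1 * (smult 2 (X1 * pderiv g) + smult (k - of_nat j) g)"
proof -
  have c2: "[:2:] = (2::complex poly)" by (simp add: numeral_poly)
  have e1: "pderiv (pderiv (Dj * g)) = D2 * g + 2 * (D1 * pderiv g) + Dj * pderiv (pderiv g)"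
    using assms by (simp only: pderiv_mult pderiv_add) (simp add: algebra_simps mult_2 del: mult_pCons_left mult_pCons_right)
  have e2: "pderiv (Dj * g) = D1 * g + Dj * pderiv g"
    using assms by (simp only: pderiv_mult) (simp add: algebra_simps del: mult_pCons_left mult_pCons_right)
  have e3: "smult u X = [:u:] * X" for u and X :: "complex poly" by simp
  have e4: "[:- of_nat j:] = - ([:of_nat j:] :: complex poly)" "[:k - of_nat j:] = [:k:] - ([:of_nat j:] :: complex poly)"
    by simp_all
  show ?thesis unfolding e1 unfolding e2 e3 e4 c2 assms(3) by (simp only: distrib_left distrib_right) algebra
qed

lemma lop_term:
  "lop c' ((pderiv^^j) q * g) - (pderiv^^j) (lop c q) * g =
   (pderiv^^j) q * ([:0,1:] * pderiv (pderiv g) + [:c'+1,-1:] * pderiv g + smult (of_nat j) g)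
   + (pderiv^^(Suc j)) q * (smult 2 ([:0,1:] * pderiv g) + smult (c' - c - of_nat j) g)"
  apply (subst lop_hd) apply (subst lop_def)
  by (rule lop_term_gen) (simp_all del: funpow.simps add: pd_Suc algebra_simps)

lemma hop_act:
  assumes "f (Suc M) = 0"
  shows "hop c' (act f M q) - act f M (hop c q) = (\<Sum>j\<le>Suc M. (pderiv^^j) q * he c c' f j)"
proof -
  have "hop c' (act f M q) - act f M (hop c q) =
     (\<Sum>j\<le>M. hop c' ((pderiv^^j) q * f j) - (pderiv^^j) (hop c q) * f j)"
    by (simp add: act_def hop_sum sum_subtractf)
  also have "\<dots> = (\<Sum>j\<le>M. (pderiv^^j) q * (pderiv (pderiv (f j)) + [:2*c',-2:] * pderiv (f j) + smult (2 * of_nat j) (f j))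
        + (pderiv^^(Suc j)) q * (smult 2 (pderiv (f j)) + smult (2*(c'-c)) (f j)))"
    by (simp only: hop_term)
  also have "\<dots> = (\<Sum>j\<le>Suc M. (pderiv^^j) q * ((pderiv (pderiv (f j)) + [:2*c',-2:] * pderiv (f j) + smult (2 * of_nat j) (f j))
        + (if j = 0 then 0 else (smult 2 (pderiv (f (j-1))) + smult (2*(c'-c)) (f (j-1))))))"
    by (rule reidx[where D = "\<lambda>j. (pderiv^^j) q"]) (simp add: assms)
  also have "\<dots> = (\<Sum>j\<le>Suc M. (pderiv^^j) q * he c c' f j)"
    by (rule sum.cong) (auto simp: he_def)
  finally show ?thesis .
qed

lemma lop_act:
  assumes "f (Suc M) = 0"
  shows "lop c' (act f M q) - act f M (lop c q) = (\<Sum>j\<le>Suc M. (pderiv^^j) q * le c c' f j)"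
proof -
  have "lop c' (act f M q) - act f M (lop c q) =
     (\<Sum>j\<le>M. lop c' ((pderiv^^j) q * f j) - (pderiv^^j) (lop c q) * f j)"
    by (simp add: act_def lop_sum sum_subtractf)
  also have "\<dots> = (\<Sum>j\<le>M. (pderiv^^j) q * ([:0,1:] * pderiv (pderiv (f j)) + [:c'+1,-1:] * pderiv (f j) + smult (of_nat j) (f j))
        + (pderiv^^(Suc j)) q * (smult 2 ([:0,1:] * pderiv (f j)) + smult (c' - c - of_nat j) (f j)))"
    by (simp only: lop_term)
  also have "\<dots> = (\<Sum>j\<le>Suc M. (pderiv^^j) q * (([:0,1:] * pderiv (pderiv (f j)) + [:c'+1,-1:] * pderiv (f j) + smult (of_nat j) (f j))
        + (if j = 0 then 0 else (smult 2 ([:0,1:] * pderiv (f (j-1))) + smult (c' - c - of_nat (j-1)) (f (j-1))))))"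
    by (rule reidx[where D = "\<lambda>j. (pderiv^^j) q"]) (simp add: assms)
  also have "\<dots> = (\<Sum>j\<le>Suc M. (pderiv^^j) q * le c c' f j)"
    by (rule sum.cong) (auto simp: le_def)
  finally show ?thesis .
qed


lemma pos_weights:
  fixes A :: "nat \<Rightarrow> nat \<Rightarrow> 'a::zero"
  assumes bound: "\<And>j r. R < r \<Longrightarrow> A j r = 0"
    and step: "\<And>j r. j < r \<Longrightarrow> (\<And>j' r'. j' + (r - j) < r' \<Longrightarrow> A j' r' = 0) \<Longrightarrow> A j r = 0"
  shows "j < r \<Longrightarrow> A j r = 0"
proof (induction "R + 1 - (r - j)" arbitrary: j r rule: less_induct)
  case less
  show ?case
  proof (cases "R < r")
    case True then show ?thesis by (rule bound)
  next
    case False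
    show ?thesis
    proof (rule step[OF less.prems])
      fix j' r' assume h: "j' + (r - j) < r'"
      show "A j' r' = 0"
      proof (cases "R < r'")
        case True thus ?thesis by (rule bound)
      next
        case False2: False
        have "R + 1 - (r' - j') < R + 1 - (r - j)" using h less.prems False False2 by linarith
        then show ?thesis using less.hyps h by auto
      qed
    qed
  qed
qed

definition HR :: "complex \<Rightarrow> (nat \<Rightarrow> nat \<Rightarrow> complex) \<Rightarrow> bool" where
  "HR h A \<longleftrightarrow> (\<forall>j r. of_nat ((r+1)*(r+2)) * A j (r+2) + 2 * (of_nat j - of_nat r) * A j r
      + (if j = 0 then 0 else 2 * of_nat (r+1) * A (j-1) (r+1) + h * A (j-1) r) = 0)"

definition LR :: "complex \<Rightarrow> complex \<Rightarrow> (nat \<Rightarrow> nat \<Rightarrow> complex) \<Rightarrow> bool" where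
  "LR al d A \<longleftrightarrow> (\<forall>j r. (of_nat r + al + 1) * of_nat (r+1) * A j (r+1) + (of_nat j - of_nat r) * A j r
      + (if j = 0 then 0 else (2 * of_nat r + d - of_nat (j-1)) * A (j-1) r) = 0)"

lemma HR_pos:
  assumes "HR h A" and bound: "\<And>j r. R < r \<Longrightarrow> A j r = 0"
  shows "j < r \<Longrightarrow> A j r = 0"
proof (rule pos_weights[of R A, OF bound])
  fix j r assume jr: "j < r" and hi: "\<And>j' r'. j' + (r - j) < r' \<Longrightarrow> A j' r' = 0"
  have e: "of_nat ((r+1)*(r+2)) * A j (r+2) + 2 * (of_nat j - of_nat r) * A j r
      + (if j = 0 then 0 else 2 * of_nat (r+1) * A (j-1) (r+1) + h * A (j-1) r) = 0"
    using assms(1) unfolding HR_def by blast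
  have "A j (r+2) = 0" by (rule hi) (use jr in auto)
  moreover have "j \<noteq> 0 \<Longrightarrow> A (j-1) (r+1) = 0" by (rule hi) (use jr in auto)
  moreover have "j \<noteq> 0 \<Longrightarrow> A (j-1) r = 0" by (rule hi) (use jr in auto)
  ultimately have "2 * (of_nat j - of_nat r) * A j r = 0" using e by (auto split: if_splits)
  moreover have "(of_nat j - of_nat r :: complex) \<noteq> 0" using jr by simp
  ultimately show "A j r = 0" by simp
qed

lemma LR_pos:
  assumes "LR al d A" and bound: "\<And>j r. R < r \<Longrightarrow> A j r = 0"
  shows "j < r \<Longrightarrow> A j r = 0"
proof (rule pos_weights[of R A, OF bound])
  fix j r assume jr: "j < r" and hi: "\<And>j' r'. j' + (r - j) < r' \<Longrightarrow> A j' r' = 0"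
  have e: "(of_nat r + al + 1) * of_nat (r+1) * A j (r+1) + (of_nat j - of_nat r) * A j r
      + (if j = 0 then 0 else (2 * of_nat r + d - of_nat (j-1)) * A (j-1) r) = 0"
    using assms(1) unfolding LR_def by blast
  have "A j (r+1) = 0" by (rule hi) (use jr in auto)
  moreover have "j \<noteq> 0 \<Longrightarrow> A (j-1) r = 0" by (rule hi) (use jr in auto)
  ultimately have "(of_nat j - of_nat r) * A j r = 0" using e by (auto split: if_splits)
  moreover have "(of_nat j - of_nat r :: complex) \<noteq> 0" using jr by simp
  ultimately show "A j r = 0" by simp
qed


lemma HR_inst:
  assumes "HR h A" "0 < j"
  shows "of_nat ((r+1)*(r+2)) * A j (r+2) + 2 * (of_nat j - of_nat r) * A j r
      + 2 * of_nat (r+1) * A (j-1) (r+1) + h * A (j-1) r = 0"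
proof -
  have "of_nat ((r+1)*(r+2)) * A j (r+2) + 2 * (of_nat j - of_nat r) * A j r
      + (if j = 0 then 0 else 2 * of_nat (r+1) * A (j-1) (r+1) + h * A (j-1) r) = 0"
    using assms(1) unfolding HR_def by blast
  then show ?thesis using assms(2) by (simp add: add.assoc)
qed

lemma H_Z:
  assumes "HR 0 A" and hT: "\<And>j. T < j \<Longrightarrow> A j j = 0"
  shows "T + s < j \<Longrightarrow> 2 * s \<le> j \<Longrightarrow> A j (j - 2 * s) = 0"
proof (induction s arbitrary: j)
  case 0 then show ?case using hT by simp
next
  case (Suc s)
  define r where "r = j - 2 * Suc s"
  have j0: "0 < j" using Suc.prems by simp
  have e: "of_nat ((r+1)*(r+2)) * A j (r+2) + 2 * (of_nat j - of_nat r) * A j r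
      + 2 * of_nat (r+1) * A (j-1) (r+1) + 0 * A (j-1) r = 0"
    by (rule HR_inst[OF assms(1) j0])
  have r2: "r + 2 = j - 2 * s" "r + 1 = (j - 1) - 2 * s" using Suc.prems unfolding r_def by auto
  have "A j (r+2) = 0" unfolding r2 by (rule Suc.IH) (use Suc.prems in auto)
  moreover have "A (j-1) (r+1) = 0" unfolding r2 by (rule Suc.IH) (use Suc.prems in auto)
  ultimately have "2 * (of_nat j - of_nat r) * A j r = 0" using e by simp
  moreover have "(of_nat j - of_nat r :: complex) = of_nat (2 * Suc s)"
    using Suc.prems unfolding r_def by (simp add: of_nat_diff)
  ultimately have "of_nat (4 * Suc s) * A j r = 0" by (simp add: mult.assoc[symmetric] of_nat_mult)
  then have "A j r = 0" by (simp only: mult_eq_0_iff of_nat_eq_0_iff) simp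
  then show ?case by (simp add: r_def)
qed


lemma H_K:
  assumes HR: "HR 0 A" and hT: "\<And>j. T < j \<Longrightarrow> A j j = 0"
  shows "s \<le> T \<Longrightarrow> A (T+s) (T-s) * of_nat (fact s) * (-2)^s = of_nat (\<Prod>i=0..<s. T - i) * A T T"
proof (induction s)
  case 0 then show ?case by simp
next
  case (Suc s)
  define j where "j = T + Suc s"
  define r where "r = T - Suc s"
  have j0: "0 < j" by (simp add: j_def)
  have e: "of_nat ((r+1)*(r+2)) * A j (r+2) + 2 * (of_nat j - of_nat r) * A j r
      + 2 * of_nat (r+1) * A (j-1) (r+1) + 0 * A (j-1) r = 0"
    by (rule HR_inst[OF HR j0])
  have r2: "r + 2 = j - 2 * s" "j - 1 = T + s" "r + 1 = T - s" using Suc.prems by (auto simp: r_def j_def)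
  have "A j (r+2) = 0" unfolding r2 by (rule H_Z[OF HR hT]) (use Suc.prems in \<open>auto simp: j_def\<close>)
  moreover have "(of_nat j - of_nat r :: complex) = 2 * of_nat (Suc s)"
    using Suc.prems unfolding r_def j_def by (simp add: of_nat_diff)
  ultimately have e2: "4 * of_nat (Suc s) * A j r + 2 * of_nat (T - s) * A (T+s) (T-s) = 0"
    using e unfolding r2 by (simp add: algebra_simps)
  have key: "A j r * of_nat (Suc s) * (-2) = of_nat (T - s) * A (T+s) (T-s)"
  proof -
    have e3: "4 * of_nat (Suc s) * A j r = - (2 * of_nat (T-s) * A (T+s) (T-s))"
      using e2 by (simp only: eq_neg_iff_add_eq_0)
    have "A j r * of_nat (Suc s) * (-2) = - (4 * of_nat (Suc s) * A j r) / 2" by simp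
    also have "\<dots> = (2 * of_nat (T-s) * A (T+s) (T-s)) / 2" unfolding e3 by simp
    also have "\<dots> = of_nat (T - s) * A (T+s) (T-s)" by simp
    finally show ?thesis .
  qed
  have IH: "A (T+s) (T-s) * of_nat (fact s) * (-2)^s = of_nat (\<Prod>i=0..<s. T - i) * A T T"
    using Suc by simp
  have "A j r * of_nat (fact (Suc s)) * (-2)^(Suc s) = (A j r * of_nat (Suc s) * (-2)) * of_nat (fact s) * (-2)^s"
    by (simp add: algebra_simps)
  also have "\<dots> = of_nat (T - s) * (A (T+s) (T-s) * of_nat (fact s) * (-2)^s)"
    unfolding key by (simp add: algebra_simps)
  also have "\<dots> = of_nat (\<Prod>i=0..<Suc s. T - i) * A T T"
    unfolding IH prod.atLeast0_lessThan_Suc of_nat_mult by (simp only: mult_ac)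
  finally show ?case by (simp add: j_def r_def)
qed

lemma H_diag:
  assumes HR: "HR 0 A" and rows: "\<And>j r. 2*m < j \<Longrightarrow> A j r = 0"
  shows "\<And>r. 0 < r \<Longrightarrow> A (2*m) r = 0"
    and "\<And>j. m < j \<Longrightarrow> A j j = 0"
    and "A m m = (-2)^m * A (2*m) 0"
proof -
  fix r :: nat assume r: "0 < r"
  have e: "of_nat (((r-1)+1)*((r-1)+2)) * A (Suc (2*m)) ((r-1)+2) + 2 * (of_nat (Suc (2*m)) - of_nat (r-1)) * A (Suc (2*m)) (r-1)
      + 2 * of_nat ((r-1)+1) * A (Suc (2*m)-1) ((r-1)+1) + 0 * A (Suc (2*m)-1) (r-1) = 0"
    by (rule HR_inst[OF HR]) simp
  then have "2 * of_nat r * A (2*m) r = 0" using r by (simp add: rows)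
  then show "A (2*m) r = 0" using r by simp
next
  have fT: "fact T \<noteq> (0::complex)" for T by simp
  have KK: "A (T+T) 0 * (-2)^T = A T T" if hT: "\<And>j. T < j \<Longrightarrow> A j j = 0" for T
  proof -
    have "A (T+T) (T-T) * of_nat (fact T) * (-2)^T = of_nat (\<Prod>i=0..<T. T - i) * A T T"
      using H_K[OF HR hT order_refl[of T]] .
    then have "A (T+T) 0 * (-2)^T * fact T = fact T * A T T"
      by (simp add: fact_prod_rev[of T] algebra_simps)
    then show ?thesis using fT[of T] by (simp add: mult.commute)
  qed
  show diag: "\<And>j. m < j \<Longrightarrow> A j j = 0"
  proof (rule ccontr)
    fix j assume "m < j" "A j j \<noteq> 0"
    define S where "S = {j. m < j \<and> A j j \<noteq> 0}"
    have Sfin: "finite S"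
      by (rule finite_subset[of _ "{..2*m}"]) (auto simp: S_def rows intro: leI)
    have jS: "j \<in> S" using \<open>m < j\<close> \<open>A j j \<noteq> 0\<close> by (simp add: S_def)
    define T where "T = Max S"
    have TS: "T \<in> S" unfolding T_def using Sfin jS Max_in by blast
    have hT: "\<And>i. T < i \<Longrightarrow> A i i = 0"
    proof (rule ccontr)
      fix i assume "T < i" "A i i \<noteq> 0"
      then have "i \<in> S" using TS by (simp add: S_def)
      then have "i \<le> T" unfolding T_def using Sfin by simp
      then show False using \<open>T < i\<close> by simp
    qed
    have "A (T+T) 0 = 0" using TS by (intro rows) (simp add: S_def)
    moreover have "A (T+T) 0 * (-2)^T = A T T" by (rule KK) (rule hT)
    ultimately have "A T T = 0" by simp
    then show False using TS by (simp add: S_def)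
  qed
  have "A (m+m) 0 * (-2)^m = A m m" by (rule KK) (rule diag)
  then show "A m m = (-2)^m * A (2*m) 0" unfolding mult_2 by (simp add: mult.commute[of "(-2)^m"])
qed


lemma H_Y:
  assumes HR: "HR h A" and bound: "\<And>j r. R < r \<Longrightarrow> A j r = 0"
    and d0: "\<And>j. Tz \<le> j \<Longrightarrow> A j j = 0"
  shows "Tz \<le> r \<Longrightarrow> A j r = 0"
proof (induction "j - r" arbitrary: j r rule: less_induct)
  case less
  show ?case
  proof (cases "j < r")
    case True then show ?thesis using HR_pos[OF HR bound] by blast
  next
    case False
    show ?thesis
    proof (cases "j = r")
      case True then show ?thesis using d0 less.prems by simp
    next
      case False2: False
      then have rj: "r < j" using False by simp
      then have j0: "0 < j" by simp
      have e: "of_nat ((r+1)*(r+2)) * A j (r+2) + 2 * (of_nat j - of_nat r) * A j r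
        + 2 * of_nat (r+1) * A (j-1) (r+1) + h * A (j-1) r = 0"
        by (rule HR_inst[OF HR j0])
      have "A j (r+2) = 0" by (rule less.hyps) (use rj less.prems in auto)
      moreover have "A (j-1) (r+1) = 0" by (rule less.hyps) (use rj less.prems in auto)
      moreover have "A (j-1) r = 0" by (rule less.hyps) (use rj less.prems in auto)
      ultimately have "2 * (of_nat j - of_nat r) * A j r = 0" using e by simp
      moreover have "(of_nat j - of_nat r :: complex) \<noteq> 0" using rj by simp
      ultimately show ?thesis by simp
    qed
  qed
qed

lemma H_off:
  assumes HR: "HR h A" and h: "h \<noteq> 0" and bound: "\<And>j r. R < r \<Longrightarrow> A j r = 0"
    and rows: "\<And>j r. M < j \<Longrightarrow> A j r = 0"
  shows "A j r = 0"
proof -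
  have diag: "A j j = 0" for j
  proof (rule ccontr)
    assume "A j j \<noteq> 0"
    define S where "S = {j. A j j \<noteq> 0}"
    have Sfin: "finite S"
      by (rule finite_subset[of _ "{..M}"]) (auto simp: S_def rows intro: leI)
    have jS: "j \<in> S" using \<open>A j j \<noteq> 0\<close> by (simp add: S_def)
    define T where "T = Max S"
    have TS: "T \<in> S" unfolding T_def using Sfin jS Max_in by blast
    have hT: "\<And>i. Suc T \<le> i \<Longrightarrow> A i i = 0"
    proof (rule ccontr)
      fix i assume "Suc T \<le> i" "A i i \<noteq> 0"
      then have "i \<in> S" by (simp add: S_def)
      then have "i \<le> T" unfolding T_def using Sfin by simp
      then show False using \<open>Suc T \<le> i\<close> by simp
    qed
    have Y: "\<And>i r. Suc T \<le> r \<Longrightarrow> A i r = 0" by (rule H_Y[OF HR bound hT])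
    have "A (T+s) T \<noteq> 0" for s
    proof (induction s)
      case 0 then show ?case using TS by (simp add: S_def)
    next
      case (Suc s)
      have j0: "0 < T + Suc s" by simp
      have e: "of_nat ((T+1)*(T+2)) * A (T + Suc s) (T+2) + 2 * (of_nat (T + Suc s) - of_nat T) * A (T + Suc s) T
        + 2 * of_nat (T+1) * A (T + Suc s - 1) (T+1) + h * A (T + Suc s - 1) T = 0"
        by (rule HR_inst[OF HR j0])
      then have "2 * of_nat (Suc s) * A (T + Suc s) T + h * A (T+s) T = 0" using Y by simp
      then show ?case using Suc h by auto
    qed
    moreover have "A (T + Suc M) T = 0" by (rule rows) simp
    ultimately show False by blast
  qed
  show ?thesis by (rule H_Y[OF HR bound, where Tz = 0]) (simp_all add: diag)
qed

lemma LR_inst: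
  assumes "LR al d A" "0 < j"
  shows "(of_nat r + al + 1) * of_nat (r+1) * A j (r+1) + (of_nat j - of_nat r) * A j r
      + (2 * of_nat r + d - of_nat (j-1)) * A (j-1) r = 0"
proof -
  have "(of_nat r + al + 1) * of_nat (r+1) * A j (r+1) + (of_nat j - of_nat r) * A j r
      + (if j = 0 then 0 else (2 * of_nat r + d - of_nat (j-1)) * A (j-1) r) = 0"
    using assms(1) unfolding LR_def by blast
  then show ?thesis using assms(2) by simp
qed

lemma L_Y:
  assumes LR: "LR al d A" and bound: "\<And>j r. R < r \<Longrightarrow> A j r = 0"
    and d0: "\<And>j. Tz \<le> j \<Longrightarrow> A j j = 0"
  shows "Tz \<le> r \<Longrightarrow> A j r = 0"
proof (induction "j - r" arbitrary: j r rule: less_induct)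
  case less
  show ?case
  proof (cases "j < r")
    case True then show ?thesis using LR_pos[OF LR bound] by blast
  next
    case False
    show ?thesis
    proof (cases "j = r")
      case True then show ?thesis using d0 less.prems by simp
    next
      case False2: False
      then have rj: "r < j" using False by simp
      then have j0: "0 < j" by simp
      have e: "(of_nat r + al + 1) * of_nat (r+1) * A j (r+1) + (of_nat j - of_nat r) * A j r
      + (2 * of_nat r + d - of_nat (j-1)) * A (j-1) r = 0"
        by (rule LR_inst[OF LR j0])
      have "A j (r+1) = 0" by (rule less.hyps) (use rj less.prems in auto)
      moreover have "A (j-1) r = 0" by (rule less.hyps) (use rj less.prems in auto)
      ultimately have "(of_nat j - of_nat r) * A j r = 0" using e by simp
      moreover have "(of_nat j - of_nat r :: complex) \<noteq> 0" using rj by simp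
      ultimately show ?thesis by simp
    qed
  qed
qed

lemma L_off:
  assumes LR: "LR al d A" and d: "\<And>z::int. d \<noteq> of_int z" and bound: "\<And>j r. R < r \<Longrightarrow> A j r = 0"
    and rows: "\<And>j r. M < j \<Longrightarrow> A j r = 0"
  shows "A j r = 0"
proof -
  have diag: "A j j = 0" for j
  proof (rule ccontr)
    assume "A j j \<noteq> 0"
    define S where "S = {j. A j j \<noteq> 0}"
    have Sfin: "finite S"
      by (rule finite_subset[of _ "{..M}"]) (auto simp: S_def rows intro: leI)
    have jS: "j \<in> S" using \<open>A j j \<noteq> 0\<close> by (simp add: S_def)
    define T where "T = Max S"
    have TS: "T \<in> S" unfolding T_def using Sfin jS Max_in by blast
    have hT: "\<And>i. Suc T \<le> i \<Longrightarrow> A i i = 0"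
    proof (rule ccontr)
      fix i assume "Suc T \<le> i" "A i i \<noteq> 0"
      then have "i \<in> S" by (simp add: S_def)
      then have "i \<le> T" unfolding T_def using Sfin by simp
      then show False using \<open>Suc T \<le> i\<close> by simp
    qed
    have Y: "\<And>i r. Suc T \<le> r \<Longrightarrow> A i r = 0" by (rule L_Y[OF LR bound hT])
    have "A (T+s) T \<noteq> 0" for s
    proof (induction s)
      case 0 then show ?case using TS by (simp add: S_def)
    next
      case (Suc s)
      have j0: "0 < T + Suc s" by simp
      have e: "(of_nat T + al + 1) * of_nat (T+1) * A (T + Suc s) (T+1) + (of_nat (T + Suc s) - of_nat T) * A (T + Suc s) T
      + (2 * of_nat T + d - of_nat (T + Suc s - 1)) * A (T + Suc s - 1) T = 0"
        by (rule LR_inst[OF LR j0])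
      then have e2: "of_nat (Suc s) * A (T + Suc s) T + (2 * of_nat T + d - of_nat (T + s)) * A (T+s) T = 0"
        using Y by simp
      have nz: "2 * of_nat T + d - of_nat (T + s) \<noteq> 0"
      proof
        assume "2 * of_nat T + d - of_nat (T + s) = 0"
        then have "d = of_int (int (T+s) - 2 * int T)" by (simp add: algebra_simps)
        then show False using d by blast
      qed
      show ?case
      proof
        assume "A (T + Suc s) T = 0"
        then have "(2 * of_nat T + d - of_nat (T + s)) * A (T+s) T = 0" using e2 by simp
        then show False using nz Suc.IH by simp
      qed
    qed
    moreover have "A (T + Suc M) T = 0" by (rule rows) simp
    ultimately show False by blast
  qed
  show ?thesis by (rule L_Y[OF LR bound, where Tz = 0]) (simp_all add: diag)
qed


lemma L_Z:
  assumes LR: "LR al 0 A" and hT: "\<And>j. T < j \<Longrightarrow> A j j = 0"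
  shows "T + s < j \<Longrightarrow> s \<le> j \<Longrightarrow> A j (j - s) = 0"
proof (induction s arbitrary: j)
  case 0 then show ?case using hT by simp
next
  case (Suc s)
  define r where "r = j - Suc s"
  have j0: "0 < j" using Suc.prems by simp
  have e: "(of_nat r + al + 1) * of_nat (r+1) * A j (r+1) + (of_nat j - of_nat r) * A j r
      + (2 * of_nat r + 0 - of_nat (j-1)) * A (j-1) r = 0"
    by (rule LR_inst[OF LR j0])
  have r2: "r + 1 = j - s" "r = (j - 1) - s" using Suc.prems unfolding r_def by auto
  have "A j (r+1) = 0" unfolding r2(1) by (rule Suc.IH) (use Suc.prems in auto)
  moreover have "A (j-1) r = 0" unfolding r2(2) by (rule Suc.IH) (use Suc.prems in auto)
  ultimately have "(of_nat j - of_nat r) * A j r = 0" using e by simp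
  moreover have "(of_nat j - of_nat r :: complex) = of_nat (Suc s)"
    using Suc.prems unfolding r_def by (simp add: of_nat_diff)
  ultimately have "of_nat (Suc s) * A j r = 0" by simp
  then have "A j r = 0" by (simp only: mult_eq_0_iff of_nat_eq_0_iff) simp
  then show ?case by (simp add: r_def)
qed

lemma L_K:
  assumes LR: "LR al 0 A" and hT: "\<And>j. T < j \<Longrightarrow> A j j = 0"
  shows "s \<le> T \<Longrightarrow> A (T+s) T * of_nat (fact s) * (-1)^s = of_nat (\<Prod>i=0..<s. T - i) * A T T"
proof (induction s)
  case 0 then show ?case by simp
next
  case (Suc s)
  define j where "j = T + Suc s"
  have j0: "0 < j" by (simp add: j_def)
  have e: "(of_nat T + al + 1) * of_nat (T+1) * A j (T+1) + (of_nat j - of_nat T) * A j T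
      + (2 * of_nat T + 0 - of_nat (j-1)) * A (j-1) T = 0"
    by (rule LR_inst[OF LR j0])
  have r2: "T + 1 = j - s" "j - 1 = T + s" using Suc.prems by (auto simp: j_def)
  have "A j (T+1) = 0" unfolding r2 by (rule L_Z[OF LR hT]) (use Suc.prems in \<open>auto simp: j_def\<close>)
  moreover have "(of_nat j - of_nat T :: complex) = of_nat (Suc s)"
    unfolding j_def by simp
  moreover have "(2 * of_nat T + 0 - of_nat (T + s) :: complex) = of_nat (T - s)"
    using Suc.prems by (simp add: of_nat_diff)
  ultimately have e2: "of_nat (Suc s) * A j T + of_nat (T - s) * A (T+s) T = 0"
    using e unfolding r2 by simp
  have key: "A j T * of_nat (Suc s) * (-1) = of_nat (T - s) * A (T+s) T"
  proof -
    have e3: "of_nat (Suc s) * A j T = - (of_nat (T-s) * A (T+s) T)"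
      using e2 by (simp only: eq_neg_iff_add_eq_0)
    show ?thesis using e3 by (simp add: mult.commute)
  qed
  have IH: "A (T+s) T * of_nat (fact s) * (-1)^s = of_nat (\<Prod>i=0..<s. T - i) * A T T"
    using Suc by simp
  have "A j T * of_nat (fact (Suc s)) * (-1)^(Suc s) = (A j T * of_nat (Suc s) * (-1)) * of_nat (fact s) * (-1)^s"
    by (simp add: algebra_simps)
  also have "\<dots> = of_nat (T - s) * (A (T+s) T * of_nat (fact s) * (-1)^s)"
    unfolding key by (simp add: algebra_simps)
  also have "\<dots> = of_nat (\<Prod>i=0..<Suc s. T - i) * A T T"
    unfolding IH prod.atLeast0_lessThan_Suc of_nat_mult by (simp only: mult_ac)
  finally show ?case by (simp add: j_def)
qed

lemma L_diag:
  assumes LR: "LR al 0 A" and rows: "\<And>j r. 2*m < j \<Longrightarrow> A j r = 0"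
  shows "\<And>r. r \<noteq> m \<Longrightarrow> A (2*m) r = 0"
    and "\<And>j. m < j \<Longrightarrow> A j j = 0"
    and "A m m = (-1)^m * A (2*m) m"
proof -
  fix r :: nat assume r: "r \<noteq> m"
  have e: "(of_nat r + al + 1) * of_nat (r+1) * A (Suc (2*m)) (r+1) + (of_nat (Suc (2*m)) - of_nat r) * A (Suc (2*m)) r
      + (2 * of_nat r + 0 - of_nat (Suc (2*m)-1)) * A (Suc (2*m)-1) r = 0"
    by (rule LR_inst[OF LR]) simp
  then have "(2 * of_nat r - of_nat (2*m)) * A (2*m) r = 0" by (simp add: rows)
  moreover have "(2 * of_nat r - of_nat (2*m) :: complex) \<noteq> 0"
  proof
    assume "(2 * of_nat r - of_nat (2*m) :: complex) = 0"
    then have "(of_nat (2*r) :: complex) = of_nat (2*m)" by simp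
    then have "2*r = 2*m" by (simp only: of_nat_eq_iff)
    then show False using r by simp
  qed
  ultimately show "A (2*m) r = 0" by simp
next
  have fT: "fact T \<noteq> (0::complex)" for T by simp
  have KK: "A (T+T) T * (-1)^T = A T T" if hT: "\<And>j. T < j \<Longrightarrow> A j j = 0" for T
  proof -
    have "A (T+T) T * of_nat (fact T) * (-1)^T = of_nat (\<Prod>i=0..<T. T - i) * A T T"
      using L_K[OF LR hT order_refl[of T]] .
    then have "A (T+T) T * (-1)^T * fact T = fact T * A T T"
      by (simp add: fact_prod_rev[of T] algebra_simps)
    then show ?thesis using fT[of T] by (simp add: mult.commute)
  qed
  show diag: "\<And>j. m < j \<Longrightarrow> A j j = 0"
  proof (rule ccontr)
    fix j assume "m < j" "A j j \<noteq> 0"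
    define S where "S = {j. m < j \<and> A j j \<noteq> 0}"
    have Sfin: "finite S"
      by (rule finite_subset[of _ "{..2*m}"]) (auto simp: S_def rows intro: leI)
    have jS: "j \<in> S" using \<open>m < j\<close> \<open>A j j \<noteq> 0\<close> by (simp add: S_def)
    define T where "T = Max S"
    have TS: "T \<in> S" unfolding T_def using Sfin jS Max_in by blast
    have hT: "\<And>i. T < i \<Longrightarrow> A i i = 0"
    proof (rule ccontr)
      fix i assume "T < i" "A i i \<noteq> 0"
      then have "i \<in> S" using TS by (simp add: S_def)
      then have "i \<le> T" unfolding T_def using Sfin by simp
      then show False using \<open>T < i\<close> by simp
    qed
    have "A (T+T) T = 0" using TS by (intro rows) (simp add: S_def)
    moreover have "A (T+T) T * (-1)^T = A T T" by (rule KK) (rule hT)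
    ultimately have "A T T = 0" by simp
    then show False using TS by (simp add: S_def)
  qed
  have "A (m+m) m * (-1)^m = A m m" by (rule KK) (rule diag)
  then show "A m m = (-1)^m * A (2*m) m" unfolding mult_2 by (simp add: mult.commute[of "(-1)^m"])
qed


lemma coeff_lin2: "coeff ([:u,v:] * P) r = u * coeff P r + (if r = 0 then 0 else v * coeff P (r - 1))"
  by (cases r) (simp_all add: coeff_pCons)

lemma pcomp_pderiv: "pcompose (pderiv p) [:c,1:] = pderiv (pcompose p [:c,1:])"
  by (simp add: pderiv_pcompose pderiv_pCons)

lemma H_rel:
  fixes f :: "nat \<Rightarrow> complex poly"
  assumes "\<And>j. he c c' f j = 0"
  shows "HR (2*(c'-c)) (\<lambda>j r. coeff (pcompose (f j) [:c',1:]) r)"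
  unfolding HR_def
proof (intro allI)
  fix j r
  define g where "g = (\<lambda>j. pcompose (f j) [:c',1:])"
  have c0: "pcompose [:2*c', -2:] [:c',1:] = [:0, -2:]"
    by (simp add: pcompose_pCons algebra_simps)
  have "pcompose (he c c' f j) [:c',1:] = 0" using assms by simp
  then have E: "pderiv (pderiv (g j)) + [:0,-2:] * pderiv (g j) + smult (2 * of_nat j) (g j)
     + (if j = 0 then 0 else smult 2 (pderiv (g (j-1))) + smult (2*(c'-c)) (g (j-1))) = 0"
    unfolding he_def g_def
    by (cases "j = 0") (simp_all only: pcompose_add pcompose_smult pcompose_mult pcompose_0 pcomp_pderiv c0 if_True if_False simp_thms)
  have "coeff (pderiv (pderiv (g j)) + [:0,-2:] * pderiv (g j) + smult (2 * of_nat j) (g j)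
     + (if j = 0 then 0 else smult 2 (pderiv (g (j-1))) + smult (2*(c'-c)) (g (j-1)))) r = 0"
    using E by simp
  then show "of_nat ((r+1)*(r+2)) * coeff (g j) (r+2) + 2 * (of_nat j - of_nat r) * coeff (g j) r
      + (if j = 0 then 0 else 2 * of_nat (r+1) * coeff (g (j-1)) (r+1) + 2*(c'-c) * coeff (g (j-1)) r) = 0"
    by (cases r) (auto simp: coeff_lin2 coeff_pderiv algebra_simps split: if_splits)
qed

lemma L_rel:
  fixes f :: "nat \<Rightarrow> complex poly"
  assumes "\<And>j. le c c' f j = 0"
  shows "LR c' (c'-c) (\<lambda>j r. coeff (f j) r)"
  unfolding LR_def
proof (intro allI)
  fix j r
  have "coeff (le c c' f j) r = 0" using assms by simp
  then show "(of_nat r + c' + 1) * of_nat (r+1) * coeff (f j) (r+1) + (of_nat j - of_nat r) * coeff (f j) r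
      + (if j = 0 then 0 else (2 * of_nat r + (c'-c) - of_nat (j-1)) * coeff (f (j-1)) r) = 0"
    unfolding le_def
    by (cases r) (auto simp: coeff_lin2 coeff_pderiv algebra_simps split: if_splits)
qed

lemma bound_exists:
  fixes g :: "nat \<Rightarrow> complex poly"
  assumes "\<And>j. M < j \<Longrightarrow> g j = 0"
  shows "\<exists>R. \<forall>j r. R < r \<longrightarrow> coeff (g j) r = 0"
proof (intro exI allI impI)
  fix j r assume r: "(\<Sum>i\<le>M. degree (g i)) < r"
  show "coeff (g j) r = 0"
  proof (cases "j \<le> M")
    case True
    have "degree (g j) \<le> (\<Sum>i\<le>M. degree (g i))"
      using True by (intro member_le_sum) auto
    then show ?thesis using r by (intro coeff_eq_0) simp
  next
    case False then show ?thesis using assms by simp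
  qed
qed


lemma inter_zero:
  fixes f p pp :: "nat \<Rightarrow> complex poly" and OP OP' :: "complex poly \<Rightarrow> complex poly"
  assumes E: "\<And>q. OP' (act f M q) - act f M (OP q) = (\<Sum>j\<le>N. (pderiv^^j) q * e j)"
    and OPs: "\<And>u a. OP' (smult u a) = smult u (OP' a)" "\<And>u a. OP (smult u a) = smult u (OP a)"
    and actp: "\<And>n. act f M (p n) = smult (lam n) (pp n)"
    and eig: "\<And>n. OP (p n) = smult (mu n) (p n)" "\<And>n. OP' (pp n) = smult (mu n) (pp n)"
    and deg: "\<And>n. degree (p n) = n" and lc: "\<And>n. coeff (p n) n = 1"
  shows "j \<le> N \<Longrightarrow> e j = 0"
proof -
  define L where "L q = (\<Sum>j\<le>N. (pderiv^^j) q * e j)" for q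
  have "L q = 0" for q
  proof (rule span_zero[of L p])
    show "L (a + b) = L a + L b" for a b
      by (simp add: L_def higher_pderiv_add algebra_simps sum.distrib)
    show "L (smult u a) = smult u (L a)" for u a
      by (simp add: L_def higher_pderiv_smult smult_sum_r mult_smult_left)
    show "L (p n) = 0" for n
    proof -
      have "L (p n) = OP' (act f M (p n)) - act f M (OP (p n))" by (simp add: L_def E)
      also have "\<dots> = 0" by (simp add: actp eig OPs act_smult mult.commute)
      finally show ?thesis .
    qed
  qed (use deg lc in auto)
  then show "j \<le> N \<Longrightarrow> e j = 0" by (intro vanish[where N=N and e=e]) (simp_all add: L_def)
qed

lemma he_zero:
  fixes f p pp :: "nat \<Rightarrow> complex poly"
  assumes fz: "\<And>j. M < j \<Longrightarrow> f j = 0"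
    and actp: "\<And>n. act f M (p n) = smult (lam n) (pp n)"
    and eig: "\<And>n. hop c (p n) = smult (mu n) (p n)" "\<And>n. hop c' (pp n) = smult (mu n) (pp n)"
    and deg: "\<And>n. degree (p n) = n" and lc: "\<And>n. coeff (p n) n = 1"
  shows "he c c' f j = 0"
proof (cases "j \<le> Suc M")
  case True
  show ?thesis
    by (rule inter_zero[where OP = "hop c" and OP' = "hop c'", OF hop_act _ _ actp eig deg lc])
       (simp_all add: fz hop_smult True)
next
  case False
  then show ?thesis by (simp add: he_def fz)
qed

lemma le_zero:
  fixes f p pp :: "nat \<Rightarrow> complex poly"
  assumes fz: "\<And>j. M < j \<Longrightarrow> f j = 0"
    and actp: "\<And>n. act f M (p n) = smult (lam n) (pp n)"
    and eig: "\<And>n. lop c (p n) = smult (mu n) (p n)" "\<And>n. lop c' (pp n) = smult (mu n) (pp n)"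
    and deg: "\<And>n. degree (p n) = n" and lc: "\<And>n. coeff (p n) n = 1"
  shows "le c c' f j = 0"
proof (cases "j \<le> Suc M")
  case True
  show ?thesis
    by (rule inter_zero[where OP = "lop c" and OP' = "lop c'", OF lop_act _ _ actp eig deg lc])
       (simp_all add: fz lop_smult True)
next
  case False
  then show ?thesis by (simp add: le_def fz)
qed

lemma coeff_pcompose_top:
  fixes p :: "complex poly"
  assumes "degree p \<le> n"
  shows "coeff (pcompose p [:c,1:]) n = coeff p n"
proof (cases "degree p = n")
  case True
  have "lead_coeff (pcompose p [:c,1:]) = lead_coeff p * lead_coeff [:c,1:] ^ degree p"
    by (rule lead_coeff_comp) simp
  moreover have "degree (pcompose p [:c,1:]) = degree p" by (simp add: degree_pcompose)
  ultimately show ?thesis using True by simp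
next
  case False
  then have "degree p < n" using assms by simp
  moreover have "degree (pcompose p [:c,1:]) = degree p" by (simp add: degree_pcompose)
  ultimately show ?thesis by (simp add: coeff_eq_0)
qed


lemma deg_lt_from:
  fixes p :: "complex poly"
  assumes "degree p \<le> j" "coeff p j = 0" "0 < j"
  shows "degree p < j"
proof (rule ccontr)
  assume "\<not> degree p < j"
  then have "degree p = j" using assms by simp
  then have "p = 0" using assms(2) by (metis leading_coeff_0_iff)
  then show False using \<open>degree p = j\<close> assms(3) by simp
qed

lemma hermite_diag_pair:
  fixes f :: "nat \<Rightarrow> complex poly"
  assumes fz: "\<And>j. 2*m < j \<Longrightarrow> f j = 0" and z: "\<And>j. he c c f j = 0"
  shows "f (2*m) = [:coeff (f (2*m)) 0:]"
    and "\<And>j. m < j \<Longrightarrow> degree (f j) < j"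
    and "degree (f m) \<le> m"
    and "coeff (f m) m = (-2)^m * coeff (f (2*m)) 0"
proof -
  define g where "g j = pcompose (f j) [:c,1:]" for j
  define A where "A j r = coeff (g j) r" for j r
  have dg: "degree (g j) = degree (f j)" for j by (simp add: g_def degree_pcompose)
  have HR: "HR 0 A"
    using H_rel[of c c f, OF z] unfolding A_def g_def by simp
  have rows: "\<And>j r. 2*m < j \<Longrightarrow> A j r = 0" by (simp add: A_def g_def fz)
  obtain R where R: "\<And>j r. R < r \<Longrightarrow> A j r = 0"
    using bound_exists[of "2*m" g] fz unfolding A_def g_def by fastforce
  have pos: "\<And>j r. j < r \<Longrightarrow> A j r = 0" using HR_pos[OF HR R] by blast
  have degj: "degree (f j) \<le> j" for j
    unfolding dg[symmetric] by (rule degree_le) (use pos in \<open>auto simp: A_def\<close>)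
  have D1: "\<And>r. 0 < r \<Longrightarrow> A (2*m) r = 0" by (rule H_diag(1)[OF HR rows])
  have D2: "\<And>j. m < j \<Longrightarrow> A j j = 0" by (rule H_diag(2)[OF HR rows])
  have D3: "A m m = (-2)^m * A (2*m) 0" by (rule H_diag(3)[OF HR rows])
  have "degree (g (2*m)) \<le> 0" by (rule degree_le) (use D1 in \<open>auto simp: A_def\<close>)
  then have d0: "degree (f (2*m)) = 0" using dg by simp
  show f2m: "f (2*m) = [:coeff (f (2*m)) 0:]" using degree_0_id[OF d0] by (rule sym)
  show "\<And>j. m < j \<Longrightarrow> degree (f j) < j"
  proof -
    fix j assume "m < j"
    have "degree (g j) < j"
      by (rule deg_lt_from) (use degj dg D2[OF \<open>m < j\<close>] \<open>m < j\<close> in \<open>auto simp: A_def\<close>)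
    then show "degree (f j) < j" using dg by simp
  qed
  show "degree (f m) \<le> m" by (rule degj)
  have "coeff (g m) m = coeff (f m) m" unfolding g_def by (rule coeff_pcompose_top) (rule degj)
  moreover have "coeff (g (2*m)) 0 = coeff (f (2*m)) 0"
    unfolding g_def by (subst f2m) simp
  ultimately show "coeff (f m) m = (-2)^m * coeff (f (2*m)) 0"
    using D3 unfolding A_def by simp
qed

lemma hermite_off_pair:
  fixes f :: "nat \<Rightarrow> complex poly"
  assumes fz: "\<And>j. M < j \<Longrightarrow> f j = 0" and z: "\<And>j. he c c' f j = 0" and cc: "c \<noteq> c'"
  shows "f j = 0"
proof -
  define g where "g j = pcompose (f j) [:c',1:]" for j
  define A where "A j r = coeff (g j) r" for j r
  have HR: "HR (2*(c'-c)) A"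
    using H_rel[of c c' f, OF z] unfolding A_def g_def by simp
  have rows: "\<And>j r. M < j \<Longrightarrow> A j r = 0" by (simp add: A_def g_def fz)
  obtain R where R: "\<And>j r. R < r \<Longrightarrow> A j r = 0"
    using bound_exists[of M g] fz unfolding A_def g_def by fastforce
  have "A j r = 0" for r by (rule H_off[OF HR _ R rows]) (use cc in simp)
  then have "g j = 0" by (intro poly_eqI) (simp add: A_def)
  then show ?thesis unfolding g_def by (simp add: pcompose_eq_0_iff)
qed

lemma laguerre_diag_pair:
  fixes f :: "nat \<Rightarrow> complex poly"
  assumes fz: "\<And>j. 2*m < j \<Longrightarrow> f j = 0" and z: "\<And>j. le c c f j = 0"
  shows "f (2*m) = monom (coeff (f (2*m)) m) m"
    and "\<And>j. m < j \<Longrightarrow> degree (f j) < j"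
    and "degree (f m) \<le> m"
    and "coeff (f m) m = (-1)^m * coeff (f (2*m)) m"
proof -
  define A where "A j r = coeff (f j) r" for j r
  have LR: "LR c 0 A"
    using L_rel[of c c f, OF z] unfolding A_def by simp
  have rows: "\<And>j r. 2*m < j \<Longrightarrow> A j r = 0" by (simp add: A_def fz)
  obtain R where R: "\<And>j r. R < r \<Longrightarrow> A j r = 0"
    using bound_exists[of "2*m" f] fz unfolding A_def by fastforce
  have pos: "\<And>j r. j < r \<Longrightarrow> A j r = 0" using LR_pos[OF LR R] by blast
  have degj: "degree (f j) \<le> j" for j
    by (rule degree_le) (use pos in \<open>auto simp: A_def\<close>)
  have D1: "\<And>r. r \<noteq> m \<Longrightarrow> A (2*m) r = 0" by (rule L_diag(1)[OF LR rows])
  have D2: "\<And>j. m < j \<Longrightarrow> A j j = 0" by (rule L_diag(2)[OF LR rows])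
  have D3: "A m m = (-1)^m * A (2*m) m" by (rule L_diag(3)[OF LR rows])
  show "f (2*m) = monom (coeff (f (2*m)) m) m"
    by (rule poly_eqI) (use D1 in \<open>auto simp: A_def coeff_monom\<close>)
  show "\<And>j. m < j \<Longrightarrow> degree (f j) < j"
  proof -
    fix j assume "m < j"
    show "degree (f j) < j"
      by (rule deg_lt_from) (use degj D2[OF \<open>m < j\<close>] \<open>m < j\<close> in \<open>auto simp: A_def\<close>)
  qed
  show "degree (f m) \<le> m" by (rule degj)
  show "coeff (f m) m = (-1)^m * coeff (f (2*m)) m"
    using D3 unfolding A_def by simp
qed

lemma laguerre_off_pair:
  fixes f :: "nat \<Rightarrow> complex poly"
  assumes fz: "\<And>j. M < j \<Longrightarrow> f j = 0" and z: "\<And>j. le c c' f j = 0"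
    and cc: "\<And>z::int. c' - c \<noteq> of_int z"
  shows "f j = 0"
proof -
  define A where "A j r = coeff (f j) r" for j r
  have LR: "LR c' (c'-c) A"
    using L_rel[of c c' f, OF z] unfolding A_def by simp
  have rows: "\<And>j r. M < j \<Longrightarrow> A j r = 0" by (simp add: A_def fz)
  obtain R where R: "\<And>j r. R < r \<Longrightarrow> A j r = 0"
    using bound_exists[of M f] fz unfolding A_def by fastforce
  have "A j r = 0" for r by (rule L_off[OF LR cc R rows])
  then show "f j = 0" by (intro poly_eqI) (simp add: A_def)
qed


abbreviation cnjp :: "complex poly \<Rightarrow> complex poly" where "cnjp \<equiv> map_poly cnj"

lemma coeff_cnjp [simp]: "coeff (cnjp p) n = cnj (coeff p n)"
  by (simp add: coeff_map_poly)
lemma cnjp_add: "cnjp (a + b) = cnjp a + cnjp b" by (rule poly_eqI) simp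
lemma cnjp_diff: "cnjp (a - b) = cnjp a - cnjp b" by (rule poly_eqI) simp
lemma cnjp_smult: "cnjp (smult c a) = smult (cnj c) (cnjp a)" by (rule poly_eqI) simp
lemma cnjp_sum: "cnjp (sum g A) = (\<Sum>x\<in>A. cnjp (g x))"
  by (induction A rule: infinite_finite_induct) (simp_all add: cnjp_add)

lemma mult_sum_smult: fixes X :: "complex poly"
  shows "X * (\<Sum>j\<in>A. smult (g j) (Q j)) = (\<Sum>j\<in>A. smult (g j) (X * Q j))"
  by (simp only: sum_distrib_left mult_smult_right)

locale phi_lin =
  fixes Phi :: "complex poly \<Rightarrow> complex"
  assumes Phi_add: "Phi (a + b) = Phi a + Phi b"
    and Phi_smult: "Phi (smult u a) = u * Phi a"
begin
lemma Phi_0 [simp]: "Phi 0 = 0" using Phi_smult[of 0 0] by simp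
lemma Phi_diff: "Phi (a - b) = Phi a - Phi b"
  using Phi_add[of "a - b" b] by simp
lemma Phi_sum: "Phi (sum g A) = (\<Sum>x\<in>A. Phi (g x))"
  by (induction A rule: infinite_finite_induct) (simp_all add: Phi_add)
end

lemma OPS_structure:
  fixes P :: "nat \<Rightarrow> ('n::finite) mpoly" and Phi :: "'n \<Rightarrow> complex poly \<Rightarrow> complex"
    and OP :: "'n \<Rightarrow> complex poly \<Rightarrow> complex poly" and mu :: "nat \<Rightarrow> complex"
  assumes monic: "\<And>n. monic_mpoly n (P n)"
    and orth: "\<And>n l i j. l \<noteq> n \<Longrightarrow> (\<Sum>k\<in>UNIV. Phi k (P n $ i $ k * cnjp (P l $ j $ k))) = 0"
    and lin: "\<And>k. phi_lin (Phi k)"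
    and pos: "\<And>k r. Phi k (r * cnjp r) = 0 \<Longrightarrow> r = 0"
    and symm: "\<And>k p q. Phi k (OP k p * cnjp q) = Phi k (p * cnjp (OP k q))"
    and OPdeg: "\<And>k p. degree (OP k p) \<le> degree p"
    and OPlead: "\<And>k p n. degree p \<le> n \<Longrightarrow> coeff (OP k p) n = mu n * coeff p n"
    and OPlin: "\<And>k a b. OP k (a - b) = OP k a - OP k b" "\<And>k u a. OP k (smult u a) = smult u (OP k a)"
  shows "\<And>n i k. i \<noteq> k \<Longrightarrow> P n $ i $ k = 0"
    and "\<And>n i. OP i (P n $ i $ i) = smult (mu n) (P n $ i $ i)"
proof -
  have degP: "degree (P n $ i $ k) \<le> n" for n i k using monic[of n] by (simp add: monic_mpoly_def)
  have lcP: "coeff (P n $ i $ k) n = (if i = k then 1 else 0)" for n i k using monic[of n] by (simp add: monic_mpoly_def)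
  have zP: "\<And>r. n < r \<Longrightarrow> coeff (P n $ i $ k) r = 0" for n i k using degP[of n i k] by (simp add: coeff_eq_0)
  have Phi_add: "Phi k (a + b) = Phi k a + Phi k b" for k a b using lin[of k] by (simp add: phi_lin_def)
  have Phi_smult: "Phi k (smult u a) = u * Phi k a" for k u a using lin[of k] by (simp add: phi_lin_def)
  have Phi_sum: "Phi k (sum g A) = (\<Sum>x\<in>A. Phi k (g x))" for k and g :: "'b \<Rightarrow> complex poly" and A
    using phi_lin.Phi_sum[OF lin[of k]] .
  have Phi_diff: "Phi k (a - b) = Phi k a - Phi k b" for k a b using phi_lin.Phi_diff[OF lin[of k]] .
  have Phi0: "Phi k 0 = 0" for k using phi_lin.Phi_0[OF lin[of k]] .
  have orthv: "\<And>v. (\<And>k r. d \<le> r \<Longrightarrow> coeff (v k) r = 0) \<Longrightarrow> (\<Sum>k\<in>UNIV. Phi k (P n $ i $ k * cnjp (v k))) = 0"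
    if "d \<le> n" for d n i
    using that
  proof (induction d)
    case 0
    fix v :: "'n \<Rightarrow> complex poly" assume "\<And>k r. 0 \<le> r \<Longrightarrow> coeff (v k) r = 0"
    then have "v k = 0" for k by (intro poly_eqI) simp
    then show "(\<Sum>k\<in>UNIV. Phi k (P n $ i $ k * cnjp (v k))) = 0"
      using Phi_smult[of _ 0 0] by simp
  next
    case (Suc d)
    fix v :: "'n \<Rightarrow> complex poly" assume hv: "\<And>k r. Suc d \<le> r \<Longrightarrow> coeff (v k) r = 0"
    define c where "c j = coeff (v j) d" for j
    define v' where "v' k = v k - (\<Sum>j\<in>UNIV. smult (c j) (P d $ j $ k))" for k
    have hv': "coeff (v' k) r = 0" if "d \<le> r" for k r
    proof (cases "r = d")
      case True
      have "(\<Sum>j\<in>UNIV. c j * coeff (P d $ j $ k) d) = c k"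
        by (simp add: lcP if_distrib cong: if_cong)
      then show ?thesis using True by (simp add: v'_def coeff_sum c_def)
    next
      case False
      then have "Suc d \<le> r" "d < r" using that by auto
      then show ?thesis by (simp add: v'_def coeff_sum hv zP)
    qed
    have IH: "(\<Sum>k\<in>UNIV. Phi k (P n $ i $ k * cnjp (v' k))) = 0"
      using Suc.IH[of v'] Suc.prems hv' by simp
    have vv: "v k = v' k + (\<Sum>j\<in>UNIV. smult (c j) (P d $ j $ k))" for k by (simp add: v'_def)
    have "(\<Sum>k\<in>UNIV. Phi k (P n $ i $ k * cnjp (v k))) =
          (\<Sum>k\<in>UNIV. Phi k (P n $ i $ k * cnjp (v' k))) +
          (\<Sum>k\<in>UNIV. \<Sum>j\<in>UNIV. cnj (c j) * Phi k (P n $ i $ k * cnjp (P d $ j $ k)))"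
    proof -
      have "Phi k (P n $ i $ k * cnjp (v k)) = Phi k (P n $ i $ k * cnjp (v' k)) +
          (\<Sum>j\<in>UNIV. cnj (c j) * Phi k (P n $ i $ k * cnjp (P d $ j $ k)))" for k
      proof -
        have "P n $ i $ k * cnjp (v k) = P n $ i $ k * cnjp (v' k) +
           (\<Sum>j\<in>UNIV. smult (cnj (c j)) (P n $ i $ k * cnjp (P d $ j $ k)))"
        proof -
          have h1: "cnjp (v k) = cnjp (v' k) + (\<Sum>j\<in>UNIV. smult (cnj (c j)) (cnjp (P d $ j $ k)))"
            by (subst vv) (simp only: cnjp_add cnjp_sum cnjp_smult)
          have h2: "P n $ i $ k * (\<Sum>j\<in>UNIV. smult (cnj (c j)) (cnjp (P d $ j $ k))) =
             (\<Sum>j\<in>UNIV. smult (cnj (c j)) (P n $ i $ k * cnjp (P d $ j $ k)))"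
            by (rule mult_sum_smult)
          show ?thesis unfolding h1 distrib_left h2 ..
        qed
        then show ?thesis by (simp only: Phi_add Phi_sum Phi_smult)
      qed
      then show ?thesis by (simp only: sum.distrib)
    qed
    also have "\<dots> = (\<Sum>j\<in>UNIV. cnj (c j) * (\<Sum>k\<in>UNIV. Phi k (P n $ i $ k * cnjp (P d $ j $ k))))"
      using IH by (subst sum.swap) (simp add: sum_distrib_left)
    also have "\<dots> = 0" using orth[of d n] Suc.prems by simp
    finally show "(\<Sum>k\<in>UNIV. Phi k (P n $ i $ k * cnjp (v k))) = 0" .
  qed
  have single: "Phi k (P n $ i $ k * cnjp q) = 0" if "\<And>r. n \<le> r \<Longrightarrow> coeff q r = 0" for n i k q
  proof -
    define v where "v k' = (if k' = k then q else 0)" for k'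
    have "(\<Sum>k'\<in>UNIV. Phi k' (P n $ i $ k' * cnjp (v k'))) = 0"
      by (rule orthv[of n n]) (auto simp: v_def that)
    moreover have "(\<Sum>k'\<in>UNIV. Phi k' (P n $ i $ k' * cnjp (v k'))) = Phi k (P n $ i $ k * cnjp q)"
      by (subst sum.remove[of UNIV k]) (auto simp: v_def Phi0 intro!: sum.neutral)
    ultimately show ?thesis by simp
  qed
  show offd: "\<And>n i k. i \<noteq> k \<Longrightarrow> P n $ i $ k = 0"
  proof -
    fix n i k assume "i \<noteq> (k::'n)"
    have "\<And>r. n \<le> r \<Longrightarrow> coeff (P n $ i $ k) r = 0"
      using zP lcP \<open>i \<noteq> k\<close> by (metis le_neq_implies_less)
    then have "Phi k (P n $ i $ k * cnjp (P n $ i $ k)) = 0" by (rule single)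
    then show "P n $ i $ k = 0" by (rule pos)
  qed
  show "\<And>n i. OP i (P n $ i $ i) = smult (mu n) (P n $ i $ i)"
  proof -
    fix n i
    define p where "p = P n $ i $ i"
    define e where "e = OP i p - smult (mu n) p"
    have dp: "degree p \<le> n" by (simp add: p_def degP)
    have de: "degree e \<le> n" unfolding e_def
      by (rule degree_diff_le) (use OPdeg[of i p] dp in auto)
    have ce: "coeff e n = 0" unfolding e_def using OPlead[OF dp, of i] by (simp add: p_def lcP)
    have ze: "\<And>r. n \<le> r \<Longrightarrow> coeff e r = 0"
      using de ce by (metis coeff_eq_0 le_neq_implies_less le_less_trans)
    have zOe: "\<And>r. n \<le> r \<Longrightarrow> coeff (OP i e) r = 0"
    proof -
      fix r assume "n \<le> r"
      show "coeff (OP i e) r = 0"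
      proof (cases "e = 0")
        case True
        have "OP i 0 = 0" using OPlin(2)[of i 0 0] by simp
        then show ?thesis using True by simp
      next
        case False
        then have "degree e < n" using de ce by (metis le_neq_implies_less leading_coeff_0_iff)
        then show ?thesis using OPdeg[of i e] \<open>n \<le> r\<close> by (intro coeff_eq_0) simp
      qed
    qed
    have "Phi i (e * cnjp e) = Phi i (OP i p * cnjp e) - mu n * Phi i (p * cnjp e)"
      by (simp add: e_def left_diff_distrib Phi_diff mult_smult_left Phi_smult)
    also have "Phi i (p * cnjp e) = 0" unfolding p_def by (rule single) (rule ze)
    also have "Phi i (OP i p * cnjp e) = Phi i (p * cnjp (OP i e))" by (rule symm)
    also have "\<dots> = 0" unfolding p_def by (rule single) (rule zOe)
    finally have "e = 0" using pos by simp
    then show "OP i (P n $ i $ i) = smult (mu n) (P n $ i $ i)" by (simp add: e_def p_def)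
  qed
qed


lemma cnjp_mult: "cnjp (p * q) = cnjp p * cnjp q"
  by (rule poly_eqI) (simp add: coeff_mult)
lemma cnjp_pderiv: "cnjp (pderiv p) = pderiv (cnjp p)"
  by (rule poly_eqI) (simp add: coeff_pderiv)
lemma cnjp_pCons: "cnjp (pCons a p) = pCons (cnj a) (cnjp p)"
  by (rule poly_eqI) (simp add: coeff_pCons split: nat.split)

lemma coeff_hop: "coeff (hop c p) r = of_nat ((r+1)*(r+2)) * coeff p (r+2) + 2 * c * of_nat (r+1) * coeff p (r+1) - 2 * of_nat r * coeff p r"
  unfolding hop_def by (cases r) (simp_all add: coeff_lin2 coeff_pderiv algebra_simps)

lemma coeff_lop: "coeff (lop c p) r = (of_nat r + c + 1) * of_nat (r+1) * coeff p (r+1) - of_nat r * coeff p r"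
  unfolding lop_def by (cases r) (simp_all add: coeff_lin2 coeff_pderiv algebra_simps)

lemma hop_deg: "degree (hop c p) \<le> degree p"
  by (rule degree_le) (simp add: coeff_hop coeff_eq_0)
lemma lop_deg: "degree (lop c p) \<le> degree p"
  by (rule degree_le) (simp add: coeff_lop coeff_eq_0)
lemma hop_lead: "degree p \<le> n \<Longrightarrow> coeff (hop c p) n = (- 2 * of_nat n) * coeff p n"
  by (simp add: coeff_hop coeff_eq_0)
lemma lop_lead: "degree p \<le> n \<Longrightarrow> coeff (lop c p) n = (- of_nat n) * coeff p n"
  by (simp add: coeff_lop coeff_eq_0)
lemma hop_diff: "hop c (a - b) = hop c a - hop c b"
  by (simp add: hop_def pderiv_diff algebra_simps del: mult_pCons_left mult_pCons_right)
lemma lop_diff: "lop c (a - b) = lop c a - lop c b"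
  by (simp add: lop_def pderiv_diff algebra_simps del: mult_pCons_left mult_pCons_right)

lemma cnjp_hop: "cnj c = c \<Longrightarrow> cnjp (hop c q) = hop c (cnjp q)"
  by (simp add: hop_def cnjp_add cnjp_mult cnjp_pderiv cnjp_pCons del: mult_pCons_left mult_pCons_right)
lemma cnjp_lop: "cnj c = c \<Longrightarrow> cnjp (lop c q) = lop c (cnjp q)"
  by (simp add: lop_def cnjp_add cnjp_mult cnjp_pderiv cnjp_pCons del: mult_pCons_left mult_pCons_right)

lemma hop_symm:
  assumes lin: "phi_lin Phi" and ibp: "\<And>r. Phi (pderiv r + [:2*c, -2:] * r) = 0" and cc: "cnj c = c"
  shows "Phi (hop c p * cnjp q) = Phi (p * cnjp (hop c q))"
proof -
  define Q where "Q = cnjp q"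
  define s where "s = pderiv p * Q - p * pderiv Q"
  have "pderiv s + [:2*c, -2:] * s = hop c p * Q - p * hop c Q"
    unfolding s_def hop_def
    by (simp add: pderiv_diff pderiv_mult algebra_simps del: mult_pCons_left mult_pCons_right)
  then have "Phi (hop c p * Q - p * hop c Q) = 0" using ibp by metis
  then show ?thesis using phi_lin.Phi_diff[OF lin] cnjp_hop[OF cc] by (simp add: Q_def)
qed

lemma lop_symm:
  assumes lin: "phi_lin Phi" and ibp: "\<And>r. Phi ([:c+1, -1:] * r + [:0, 1:] * pderiv r) = 0" and cc: "cnj c = c"
  shows "Phi (lop c p * cnjp q) = Phi (p * cnjp (lop c q))"
proof -
  define Q where "Q = cnjp q"
  define s where "s = pderiv p * Q - p * pderiv Q"
  have "[:c+1, -1:] * s + [:0, 1:] * pderiv s = lop c p * Q - p * lop c Q"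
    unfolding s_def lop_def
    by (simp add: pderiv_diff pderiv_mult algebra_simps del: mult_pCons_left mult_pCons_right)
  then have "Phi (lop c p * Q - p * lop c Q) = 0" using ibp by metis
  then show ?thesis using phi_lin.Phi_diff[OF lin] cnjp_lop[OF cc] by (simp add: Q_def)
qed


definition mom :: "real set \<Rightarrow> (real \<Rightarrow> real) \<Rightarrow> nat \<Rightarrow> real" where
  "mom S w j = (LINT x|lborel. indicator S x * (x^j * w x))"

definition Phi :: "real set \<Rightarrow> (real \<Rightarrow> real) \<Rightarrow> complex poly \<Rightarrow> complex" where
  "Phi S w r = (\<Sum>j\<le>degree r. coeff r j * of_real (mom S w j))"

lemma Phi_ext: "degree r \<le> N \<Longrightarrow> Phi S w r = (\<Sum>j\<le>N. coeff r j * of_real (mom S w j))"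
  unfolding Phi_def
  by (rule sum.mono_neutral_left) (auto simp: coeff_eq_0)

lemma Phi_lin: "phi_lin (Phi S w)"
proof
  fix a b :: "complex poly"
  define N where "N = max (degree a) (degree b)"
  have "degree (a + b) \<le> N" unfolding N_def by (rule degree_add_le) auto
  then show "Phi S w (a + b) = Phi S w a + Phi S w b"
    by (simp add: Phi_ext[of _ N] N_def distrib_right sum.distrib)
next
  fix u and a :: "complex poly"
  show "Phi S w (smult u a) = u * Phi S w a"
    by (simp add: Phi_ext[of _ "degree a"] sum_distrib_left mult.assoc)
qed

lemma Phi_monom: "Phi S w (monom c j) = c * of_real (mom S w j)"
proof -
  have ifm: "(if P then c else 0) * x = (if P then c * x else 0)" for P and x :: complex by simp
  show ?thesis by (simp add: Phi_ext[of _ j] degree_monom_le coeff_monom ifm)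
qed

lemma Phi_zero_on_monoms:
  assumes L: "\<And>a b. L (a + b) = L a + L b" "\<And>u a. L (smult u a) = smult u (L a)"
    and z: "\<And>j. Phi S w (L (monom 1 j)) = 0"
  shows "Phi S w (L r) = 0"
proof -
  interpret phi_lin "Phi S w" by (rule Phi_lin)
  have L0: "L 0 = 0" using L(2)[of 0 0] by simp
  have Ls: "L (sum g A) = (\<Sum>x\<in>A. L (g x))" for g :: "nat \<Rightarrow> complex poly" and A
    by (induction A rule: infinite_finite_induct) (simp_all add: L0 L(1))
  have "r = (\<Sum>i\<le>degree r. smult (coeff r i) (monom 1 i))"
    by (simp add: smult_monom poly_as_sum_of_monoms)
  then have "L r = (\<Sum>i\<le>degree r. smult (coeff r i) (L (monom 1 i)))"
    by (metis (no_types, lifting) L(2) Ls sum.cong)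
  then show ?thesis by (simp add: Phi_sum Phi_smult z)
qed


lemma lin_monom: "[:u, v:] * monom 1 j = monom u j + monom (v::complex) (Suc j)"
  by (rule poly_eqI) (auto simp: coeff_lin2 coeff_monom simp del: mult_pCons_left mult_pCons_right)

lemma Phi_ibp_H:
  assumes m: "\<And>j. of_nat j * mom S w (j-1) + 2 * b * mom S w j - 2 * mom S w (Suc j) = 0"
  shows "Phi S w (pderiv r + [:2 * complex_of_real b, -2:] * r) = 0"
proof (rule Phi_zero_on_monoms[where L = "\<lambda>r. pderiv r + [:2 * complex_of_real b, -2:] * r"])
  show "\<And>a c. pderiv (a + c) + [:2 * complex_of_real b, - 2:] * (a + c) =
      pderiv a + [:2 * complex_of_real b, - 2:] * a + (pderiv c + [:2 * complex_of_real b, - 2:] * c)"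
    by (simp add: pderiv_add algebra_simps del: mult_pCons_left mult_pCons_right)
  show "\<And>u a. pderiv (smult u a) + [:2 * complex_of_real b, - 2:] * smult u a =
       smult u (pderiv a + [:2 * complex_of_real b, - 2:] * a)"
    by (simp add: pderiv_smult smult_add_right del: mult_pCons_left mult_pCons_right)
  fix j
  have "Phi S w (pderiv (monom 1 j) + [:2 * complex_of_real b, -2:] * monom 1 j) =
        of_nat j * of_real (mom S w (j-1)) + 2 * of_real b * of_real (mom S w j) - 2 * of_real (mom S w (Suc j))"
    using phi_lin.Phi_add[OF Phi_lin] phi_lin.Phi_diff[OF Phi_lin]
    by (simp add: pderiv_monom lin_monom Phi_monom del: mult_pCons_left mult_pCons_right)
  also have "\<dots> = of_real (of_nat j * mom S w (j-1) + 2 * b * mom S w j - 2 * mom S w (Suc j))"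
    by simp
  also have "\<dots> = 0" using m by simp
  finally show "Phi S w (pderiv (monom 1 j) + [:2 * complex_of_real b, -2:] * monom 1 j) = 0" .
qed

lemma Phi_ibp_L:
  assumes m: "\<And>j. (a + of_nat j + 1) * mom S w j - mom S w (Suc j) = 0"
  shows "Phi S w ([:complex_of_real a + 1, -1:] * r + [:0, 1:] * pderiv r) = 0"
proof (rule Phi_zero_on_monoms[where L = "\<lambda>r. [:complex_of_real a + 1, -1:] * r + [:0, 1:] * pderiv r"])
  show "\<And>aa c. [:complex_of_real a + 1, -1:] * (aa + c) + [:0, 1:] * pderiv (aa + c) =
      [:complex_of_real a + 1, -1:] * aa + [:0, 1:] * pderiv aa + ([:complex_of_real a + 1, -1:] * c + [:0, 1:] * pderiv c)"
    by (simp add: pderiv_add algebra_simps del: mult_pCons_left mult_pCons_right)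
  show "\<And>u aa. [:complex_of_real a + 1, -1:] * smult u aa + [:0, 1:] * pderiv (smult u aa) =
       smult u ([:complex_of_real a + 1, -1:] * aa + [:0, 1:] * pderiv aa)"
    by (simp add: pderiv_smult smult_add_right del: mult_pCons_left mult_pCons_right)
  fix j
  have e: "[:0, 1:] * pderiv (monom (1::complex) j) = monom (of_nat j) j"
    by (rule poly_eqI) (auto simp: coeff_lin2 coeff_monom coeff_pderiv simp del: mult_pCons_left mult_pCons_right)
  have "Phi S w ([:complex_of_real a + 1, -1:] * monom 1 j + [:0, 1:] * pderiv (monom 1 j)) =
        (of_real a + 1) * of_real (mom S w j) - of_real (mom S w (Suc j)) + of_nat j * of_real (mom S w j)"
    using phi_lin.Phi_add[OF Phi_lin] phi_lin.Phi_diff[OF Phi_lin]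
    by (simp add: e lin_monom Phi_monom del: mult_pCons_left mult_pCons_right)
  also have "\<dots> = of_real ((a + of_nat j + 1) * mom S w j - mom S w (Suc j))"
    by (simp add: algebra_simps)
  also have "\<dots> = 0" using m by simp
  finally show "Phi S w ([:complex_of_real a + 1, -1:] * monom 1 j + [:0, 1:] * pderiv (monom 1 j)) = 0" .
qed


lemma poly_of_real_sum: "poly r (complex_of_real x) * complex_of_real (w x) =
   (\<Sum>j\<le>degree r. coeff r j * complex_of_real (x^j * w x))"
  by (simp add: poly_altdef sum_distrib_right mult.assoc)

lemma bridge:
  assumes INT: "\<And>j. integrable lborel (\<lambda>x. indicator S x * (x^j * w x))"
  shows "integrable lborel (\<lambda>x. indicator S x *\<^sub>R (poly r (complex_of_real x) * complex_of_real (w x)))"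
    and "(LINT x|lborel. indicator S x *\<^sub>R (poly r (complex_of_real x) * complex_of_real (w x))) = Phi S w r"
proof -
  have eq: "indicator S x *\<^sub>R (poly r (complex_of_real x) * complex_of_real (w x)) =
     (\<Sum>j\<le>degree r. coeff r j * complex_of_real (indicator S x * (x^j * w x)))" for x
    unfolding poly_of_real_sum by (simp add: scaleR_sum_right scaleR_conv_of_real sum_distrib_left algebra_simps)
  have ij: "integrable lborel (\<lambda>x. coeff r j * complex_of_real (indicator S x * (x^j * w x)))" for j
  proof -
    have "integrable lborel (\<lambda>x. complex_of_real (indicator S x * (x^j * w x)))"
      using INT[of j] by (simp only: complex_of_real_integrable_eq)
    then show ?thesis by (rule integrable_mult_right)
  qed
  show "integrable lborel (\<lambda>x. indicator S x *\<^sub>R (poly r (complex_of_real x) * complex_of_real (w x)))"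
    unfolding eq by (rule Bochner_Integration.integrable_sum) (rule ij)
  show "(LINT x|lborel. indicator S x *\<^sub>R (poly r (complex_of_real x) * complex_of_real (w x))) = Phi S w r"
  proof -
    have "(LINT x|lborel. (\<Sum>j\<le>degree r. coeff r j * complex_of_real (indicator S x * (x^j * w x)))) =
       (\<Sum>j\<le>degree r. (LINT x|lborel. coeff r j * complex_of_real (indicator S x * (x^j * w x))))"
      by (rule Bochner_Integration.integral_sum) (rule ij)
    also have "\<dots> = Phi S w r"
      unfolding Phi_def mom_def by (simp only: integral_mult_right_zero integral_complex_of_real)
    finally show ?thesis unfolding eq .
  qed
qed

lemma mip_Phi:
  fixes Q R :: "'n::finite mpoly"
  assumes INT: "\<And>k j. integrable lborel (\<lambda>x. indicator S x * (x^j * w k x))"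
  shows "mip S w Q R $ i $ j = (\<Sum>k\<in>UNIV. Phi S (w k) (Q $ i $ k * cnjp (R $ j $ k)))"
proof -
  have eq: "indicator S x *\<^sub>R (\<Sum>k\<in>UNIV. poly (Q$i$k) (complex_of_real x) * complex_of_real (w k x)
                   * cnj (poly (R$j$k) (complex_of_real x))) =
     (\<Sum>k\<in>UNIV. indicator S x *\<^sub>R (poly (Q $ i $ k * cnjp (R $ j $ k)) (complex_of_real x) * complex_of_real (w k x)))" for x
  proof -
    have pc: "cnj (poly p (complex_of_real x)) = poly (cnjp p) (complex_of_real x)" for p
      using poly_cnj[of p "complex_of_real x"] by simp
    show ?thesis unfolding scaleR_sum_right pc poly_mult by (simp only: mult_ac)
  qed
  have B1: "integrable lborel (\<lambda>x. indicator S x *\<^sub>R (poly (Q $ i $ k * cnjp (R $ j $ k)) (complex_of_real x) * complex_of_real (w k x)))" for k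
    by (rule bridge(1)) (rule INT)
  have B2: "(LINT x|lborel. indicator S x *\<^sub>R (poly (Q $ i $ k * cnjp (R $ j $ k)) (complex_of_real x) * complex_of_real (w k x)))
     = Phi S (w k) (Q $ i $ k * cnjp (R $ j $ k))" for k
    by (rule bridge(2)) (rule INT)
  have "(LINT x|lborel. (\<Sum>k\<in>UNIV. indicator S x *\<^sub>R (poly (Q $ i $ k * cnjp (R $ j $ k)) (complex_of_real x) * complex_of_real (w k x))))
     = (\<Sum>k\<in>UNIV. (LINT x|lborel. indicator S x *\<^sub>R (poly (Q $ i $ k * cnjp (R $ j $ k)) (complex_of_real x) * complex_of_real (w k x))))"
    by (rule Bochner_Integration.integral_sum) (rule B1)
  then show ?thesis
    unfolding mip_def set_lebesgue_integral_def vec_lambda_beta eq B2 .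
qed

lemma Phi_pos:
  assumes INT: "\<And>j. integrable lborel (\<lambda>x. indicator S x * (x^j * w x))"
    and wpos: "\<And>x. x \<in> S \<Longrightarrow> 0 < w x" and sub: "{1<..<2} \<subseteq> S"
    and z: "Phi S w (r * cnjp r) = 0"
  shows "r = 0"
proof (rule ccontr)
  assume r0: "r \<noteq> 0"
  define g where "g x = indicator S x * ((cmod (poly r (complex_of_real x)))\<^sup>2 * w x)" for x
  have eq: "indicator S x *\<^sub>R (poly (r * cnjp r) (complex_of_real x) * complex_of_real (w x)) = complex_of_real (g x)" for x
  proof -
    have pc: "poly (cnjp r) (complex_of_real x) = cnj (poly r (complex_of_real x))"
      using poly_cnj[of r "complex_of_real x"] by simp
    have "poly (r * cnjp r) (complex_of_real x) = complex_of_real ((cmod (poly r (complex_of_real x)))\<^sup>2)"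
      unfolding poly_mult pc complex_norm_square ..
    then show ?thesis by (simp add: g_def scaleR_conv_of_real)
  qed
  have "integrable lborel (\<lambda>x. complex_of_real (g x))"
    using bridge(1)[OF INT, of "r * cnjp r"] unfolding eq .
  then have ig: "integrable lborel g" by (simp add: complex_of_real_integrable_eq)
  have "complex_of_real (LINT x|lborel. g x) = 0"
    using bridge(2)[OF INT, of "r * cnjp r"] z unfolding eq by (simp add: integral_complex_of_real)
  then have "(LINT x|lborel. g x) = 0" by simp
  moreover have "AE x in lborel. 0 \<le> g x" using wpos by (auto simp: g_def indicator_def less_imp_le)
  ultimately have ae: "AE x in lborel. g x = 0" using integral_nonneg_eq_0_iff_AE[OF ig] by simp
  define Z where "Z = {x::real. poly r (complex_of_real x) = 0}"
  have "finite Z"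
  proof -
    have "finite {z. poly r z = 0}" by (rule poly_roots_finite[OF r0])
    then have "finite (complex_of_real -` {z. poly r z = 0})"
      by (rule finite_vimageI) (simp add: inj_on_def)
    then show ?thesis by (simp add: Z_def vimage_def)
  qed
  then have "Z \<in> null_sets lborel" by (simp add: finite_imp_null_set_lborel)
  then have aeZ: "AE x in lborel. x \<notin> Z" by (rule AE_not_in)
  have "AE x in lborel. x \<notin> {1<..<2::real}"
    using ae aeZ
  proof eventually_elim
    case (elim x)
    show ?case
    proof
      assume "x \<in> {1<..<2}"
      then have "x \<in> S" using sub by auto
      then have "(cmod (poly r (complex_of_real x)))\<^sup>2 * w x = 0" using elim by (simp add: g_def)
      then have "poly r (complex_of_real x) = 0" using wpos[OF \<open>x \<in> S\<close>] by simp
      then show False using elim by (simp add: Z_def)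
    qed
  qed
  then have "emeasure lborel {1<..<2::real} = 0"
    by (subst (asm) AE_iff_measurable[of "{1<..<2}"]) auto
  then show False by simp
qed


lemma lim_H_top: "((\<lambda>x::real. x^j * exp (- x\<^sup>2 + 2 * b * x)) \<longlongrightarrow> 0) at_top"
proof -
  have 1: "((\<lambda>x::real. x^j / exp x) \<longlongrightarrow> 0) at_top" by (rule tendsto_power_div_exp_0)
  have 2: "((\<lambda>x::real. exp ((1 + 2*b) * x - x\<^sup>2)) \<longlongrightarrow> 0) at_top" by real_asymp
  have "((\<lambda>x::real. x^j / exp x * exp ((1 + 2*b) * x - x\<^sup>2)) \<longlongrightarrow> 0 * 0) at_top"
    by (rule tendsto_mult[OF 1 2])
  moreover have "x^j / exp x * exp ((1 + 2*b) * x - x\<^sup>2) = x^j * exp (- x\<^sup>2 + 2 * b * x)" for x :: real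
  proof -
    have "exp ((1 + 2*b) * x - x\<^sup>2) = exp x * exp (- x\<^sup>2 + 2 * b * x)"
      by (simp add: exp_add[symmetric] algebra_simps)
    then show ?thesis by simp
  qed
  ultimately show ?thesis by simp
qed

lemma lim_H_bot: "((\<lambda>x::real. x^j * exp (- x\<^sup>2 + 2 * b * x)) \<longlongrightarrow> 0) at_bot"
proof -
  have 1: "((\<lambda>x::real. x^j / exp x) \<longlongrightarrow> 0) at_top" by (rule tendsto_power_div_exp_0)
  have 2: "((\<lambda>x::real. exp ((1 - 2*b) * x - x\<^sup>2)) \<longlongrightarrow> 0) at_top" by real_asymp
  have "((\<lambda>x::real. (-1)^j * (x^j / exp x * exp ((1 - 2*b) * x - x\<^sup>2))) \<longlongrightarrow> (-1)^j * (0 * 0)) at_top"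
    by (intro tendsto_mult tendsto_const 1 2)
  moreover have "(-1)^j * (x^j / exp x * exp ((1 - 2*b) * x - x\<^sup>2)) = (-x)^j * exp (- (-x)\<^sup>2 + 2 * b * (-x))" for x :: real
  proof -
    have "exp ((1 - 2*b) * x - x\<^sup>2) = exp x * exp (- (-x)\<^sup>2 + 2 * b * (-x))"
      by (simp add: exp_add[symmetric] algebra_simps)
    then show ?thesis by (simp add: power_minus[of x j])
  qed
  ultimately have "((\<lambda>x::real. (-x)^j * exp (- (-x)\<^sup>2 + 2 * b * (-x))) \<longlongrightarrow> 0) at_top" by simp
  then show ?thesis unfolding filterlim_at_bot_mirror by simp
qed


lemma int_H: "integrable lborel (\<lambda>x::real. x^j * exp (- x\<^sup>2 + 2 * b * x))"
proof -
  define s where "s = sqrt (1/2::real)"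
  have s2: "s\<^sup>2 = 1/2" by (simp add: s_def)
  have nd: "normal_density b s x = 1 / sqrt pi * exp (- (x - b)\<^sup>2)" for x
    by (simp add: normal_density_def s2)
  have e1: "exp (- x\<^sup>2 + 2 * b * x) = exp (b\<^sup>2) * sqrt pi * normal_density b s x" for x
  proof -
    have "exp (- x\<^sup>2 + 2 * b * x) = exp (b\<^sup>2) * exp (- (x - b)\<^sup>2)"
      by (simp add: exp_add[symmetric] power2_eq_square algebra_simps)
    then show ?thesis by (simp add: nd)
  qed
  have e2: "x^j = (\<Sum>i\<le>j. of_nat (j choose i) * (x - b)^i * b^(j - i))" for x :: real
    using binomial_ring[of "x - b" b j] by simp
  have eq: "x^j * exp (- x\<^sup>2 + 2 * b * x) =
     (\<Sum>i\<le>j. (exp (b\<^sup>2) * sqrt pi * of_nat (j choose i) * b^(j - i)) * (normal_density b s x * (x - b)^i))" for x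
    unfolding e1 e2[of x] sum_distrib_right by (rule sum.cong) (simp_all add: algebra_simps)
  show ?thesis unfolding eq
    by (intro Bochner_Integration.integrable_sum integrable_mult_right integrable_normal_moment) (simp add: s_def)
qed


lemma einterval_UNIV: "einterval (-\<infinity>) \<infinity> = (UNIV :: real set)"
  by (auto simp: einterval_def)

lemma mom_H:
  fixes b :: real
  defines "w \<equiv> (\<lambda>x::real. exp (- x\<^sup>2 + 2 * b * x))"
  shows "of_nat j * mom UNIV w (j-1) + 2 * b * mom UNIV w j - 2 * mom UNIV w (Suc j) = 0"
proof -
  define F where "F x = x^j * w x" for x
  define f where "f x = of_nat j * (x^(j-1) * w x) + 2 * b * (x^j * w x) - 2 * (x^(Suc j) * w x)" for x
  have I: "integrable lborel (\<lambda>x. x^i * w x)" for i unfolding w_def by (rule int_H)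
  have If: "integrable lborel f" unfolding f_def
    by (intro Bochner_Integration.integrable_diff Bochner_Integration.integrable_add Bochner_Integration.integrable_mult_right I)
  have D: "(F has_vector_derivative f x) (at x)" for x
  proof -
    have "(F has_real_derivative f x) (at x)"
      unfolding F_def f_def w_def
      apply (rule derivative_eq_intros refl | simp)+
      apply (cases j) apply (simp_all add: algebra_simps)
      done
    then show ?thesis by (simp add: has_real_derivative_iff_has_vector_derivative)
  qed
  have C: "isCont f x" for x unfolding f_def w_def by (intro continuous_intros)
  have "(LBINT x=-\<infinity>..\<infinity>. f x) = 0 - 0"
  proof (rule interval_integral_FTC_integrable[where F = F])
    show "set_integrable lborel (einterval (-\<infinity>) \<infinity>) f"
      unfolding einterval_UNIV set_integrable_def using If by simp
    show "((F \<circ> real_of_ereal) \<longlongrightarrow> 0) (at_right (-\<infinity>))"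
      unfolding ereal_tendsto_simps1 F_def w_def by (rule lim_H_bot)
    show "((F \<circ> real_of_ereal) \<longlongrightarrow> 0) (at_left \<infinity>)"
      unfolding ereal_tendsto_simps1 F_def w_def by (rule lim_H_top)
  qed (auto intro: D C)
  then have "(LBINT x. f x) = 0"
    by (simp add: interval_lebesgue_integral_le_eq einterval_UNIV set_lebesgue_integral_def)
  moreover have "(LBINT x. f x) = of_nat j * mom UNIV w (j-1) + 2 * b * mom UNIV w j - 2 * mom UNIV w (Suc j)"
  proof -
    have hb: "has_bochner_integral lborel (\<lambda>x. x^i * w x) (mom UNIV w i)" for i
      unfolding mom_def using has_bochner_integral_integrable[OF I[of i]] by simp
    have "has_bochner_integral lborel f (of_nat j * mom UNIV w (j-1) + 2 * b * mom UNIV w j - 2 * mom UNIV w (Suc j))"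
      unfolding f_def
      by (intro has_bochner_integral_diff has_bochner_integral_add has_bochner_integral_mult_right hb)
    then show ?thesis by (rule has_bochner_integral_integral_eq)
  qed
  ultimately show ?thesis by simp
qed


lemma wL_eq:
  fixes x a :: real
  assumes "0 < x"
  shows "x^j * (exp (- x) * x powr a) = x powr (a + of_nat j) / exp x"
proof -
  have "x powr (a + of_nat j) = x powr a * x^j" using assms by (simp add: powr_add powr_realpow)
  then show ?thesis by (simp add: exp_minus field_simps)
qed

lemma int_L:
  fixes a :: real
  assumes a: "-1 < a"
  shows "integrable lborel (\<lambda>x. indicator {0<..} x * (x^j * (exp (- x) * x powr a)))"
proof -
  define s where "s = a + of_nat j + 1"
  have s0: "0 < s" using a by (simp add: s_def)
  define h where "h t = t powr (s - 1) / exp t" for t :: real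
  have "(h has_integral Gamma s) {0..}" unfolding h_def by (rule Gamma_integral_real[OF s0])
  then have "h integrable_on {0..}" by blast
  then have "h absolutely_integrable_on {0..}"
    by (rule nonnegative_absolutely_integrable_1) (simp add: h_def)
  then have "integrable lebesgue (\<lambda>x. indicator {0..} x *\<^sub>R h x)"
    by (simp add: set_integrable_def)
  moreover have "(\<lambda>x. indicator {0..} x *\<^sub>R h x) \<in> borel_measurable lborel"
    unfolding h_def by measurable
  ultimately have "integrable lborel (\<lambda>x. indicator {0..} x *\<^sub>R h x)"
    by (simp add: integrable_completion)
  moreover have "indicator {0..} x *\<^sub>R h x = indicator {0<..} x * (x^j * (exp (- x) * x powr a))" for x :: real
  proof (cases "0 < x")
    case True then show ?thesis by (simp add: h_def wL_eq s_def)
  next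
    case False
    then show ?thesis by (cases "x = 0") (auto simp: h_def indicator_def)
  qed
  ultimately show ?thesis by simp
qed

lemma mom_L:
  fixes a :: real
  assumes a: "-1 < a"
  defines "w \<equiv> (\<lambda>x::real. exp (- x) * x powr a)"
  shows "(a + of_nat j + 1) * mom {0<..} w j - mom {0<..} w (Suc j) = 0"
proof -
  define s where "s = a + of_nat j + 1"
  have s0: "0 < s" using a by (simp add: s_def)
  define F where "F x = x powr s * exp (- x)" for x :: real
  define f where "f x = s * (x^j * w x) - x^(Suc j) * w x" for x :: real
  have I: "integrable lborel (\<lambda>x. indicator {0<..} x * (x^i * w x))" for i unfolding w_def by (rule int_L[OF a])
  have Ii: "integrable lborel (\<lambda>x. indicator {0<..} x *\<^sub>R f x)"
  proof -
    have "(\<lambda>x. indicator {0<..} x *\<^sub>R f x) = (\<lambda>x. s * (indicator {0<..} x * (x^j * w x)) - indicator {0<..} x * (x^(Suc j) * w x))"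
      by (auto simp: f_def indicator_def)
    then show ?thesis
      by (simp only:) (intro Bochner_Integration.integrable_diff Bochner_Integration.integrable_mult_right I)
  qed
  have D: "(F has_vector_derivative f x) (at x)" if "0 < x" for x
  proof -
    have e1: "x^j * w x = x powr (s - 1) * exp (- x)" using that
      by (simp add: w_def s_def powr_add powr_realpow)
    have e2: "x^(Suc j) * w x = x powr s * exp (- x)" using that
      by (simp add: w_def s_def powr_add powr_realpow)
    have d1: "((\<lambda>x. x powr s) has_real_derivative s * x powr (s - 1)) (at x)"
      by (rule has_real_derivative_powr[OF that])
    have d2: "((\<lambda>x::real. exp (- x)) has_real_derivative exp (- x) * (- 1)) (at x)"
      by (auto intro!: derivative_eq_intros)
    have "(F has_real_derivative x powr s * (exp (- x) * (- 1)) + (s * x powr (s - 1)) * exp (- x)) (at x)"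
      unfolding F_def by (rule DERIV_mult'[OF d1 d2])
    moreover have "x powr s * (exp (- x) * (- 1)) + (s * x powr (s - 1)) * exp (- x) = f x"
      unfolding f_def e1 e2 by (simp add: algebra_simps)
    ultimately show ?thesis by (simp add: has_real_derivative_iff_has_vector_derivative)
  qed
  have C: "isCont f x" if "0 < x" for x
    unfolding f_def w_def using that by (intro continuous_intros) auto
  have ei: "einterval 0 \<infinity> = {0::real<..}" by (auto simp: einterval_def zero_ereal_def)
  have "(LBINT x=0..\<infinity>. f x) = 0 - 0"
  proof (rule interval_integral_FTC_integrable[where F = F])
    show "set_integrable lborel (einterval 0 \<infinity>) f"
      unfolding ei set_integrable_def by (rule Ii)
    show "((F \<circ> real_of_ereal) \<longlongrightarrow> 0) (at_right 0)"
      unfolding zero_ereal_def ereal_tendsto_simps1 F_def using s0 by real_asymp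
    show "((F \<circ> real_of_ereal) \<longlongrightarrow> 0) (at_left \<infinity>)"
      unfolding ereal_tendsto_simps1 F_def using s0 by real_asymp
  qed (auto intro: D C simp: zero_ereal_def)
  then have "(LBINT x. indicator {0<..} x *\<^sub>R f x) = 0"
    by (simp add: interval_lebesgue_integral_0_infty set_lebesgue_integral_def)
  moreover have "(LBINT x. indicator {0<..} x *\<^sub>R f x) = s * mom {0<..} w j - mom {0<..} w (Suc j)"
  proof -
    have hb: "has_bochner_integral lborel (\<lambda>x. indicator {0<..} x * (x^i * w x)) (mom {0<..} w i)" for i
      unfolding mom_def using has_bochner_integral_integrable[OF I[of i]] by simp
    have "(\<lambda>x. indicator {0<..} x *\<^sub>R f x) = (\<lambda>x. s * (indicator {0<..} x * (x^j * w x)) - indicator {0<..} x * (x^(Suc j) * w x))"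
      by (auto simp: f_def indicator_def)
    moreover have "has_bochner_integral lborel (\<lambda>x. s * (indicator {0<..} x * (x^j * w x)) - indicator {0<..} x * (x^(Suc j) * w x))
       (s * mom {0<..} w j - mom {0<..} w (Suc j))"
      by (intro has_bochner_integral_diff has_bochner_integral_mult_right hb)
    ultimately show ?thesis by (simp add: has_bochner_integral_integral_eq)
  qed
  ultimately show ?thesis by (simp add: s_def)
qed


lemma mat_deriv_pow: "(mat_deriv ^^ j) P $ i $ l = (pderiv ^^ j) (P $ i $ l)"
  by (induction j) (simp_all add: mat_deriv_def)

lemma sum_single:
  fixes g :: "'n::finite \<Rightarrow> 'a::comm_monoid_add"
  assumes "\<And>l. l \<noteq> i \<Longrightarrow> g l = 0"
  shows "(\<Sum>l\<in>UNIV. g l) = g i"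
  by (subst sum.remove[of UNIV i]) (auto simp: assms intro!: sum.neutral)

lemma DW_entry:
  fixes Pn :: "'n::finite mpoly"
  assumes diag: "\<And>i k. i \<noteq> k \<Longrightarrow> Pn $ i $ k = 0"
  shows "dop_act F M Pn $ i $ k = act (\<lambda>j. if j \<le> M then F j $ i $ k else 0) M (Pn $ i $ i)"
    and "(const_mpoly L ** Pn) $ i $ k = smult (L $ i $ k) (Pn $ k $ k)"
proof -
  have "dop_act F M Pn $ i $ k = (\<Sum>j\<le>M. (((mat_deriv ^^ j) Pn) ** F j) $ i $ k)"
    by (simp add: dop_act_def sum_component)
  also have "\<dots> = (\<Sum>j\<le>M. (pderiv ^^ j) (Pn $ i $ i) * F j $ i $ k)"
  proof (rule sum.cong)
    fix j assume "j \<in> {..M}"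
    have "(((mat_deriv ^^ j) Pn) ** F j) $ i $ k = (\<Sum>l\<in>UNIV. (pderiv ^^ j) (Pn $ i $ l) * F j $ l $ k)"
      by (simp add: matrix_matrix_mult_def mat_deriv_pow)
    also have "\<dots> = (pderiv ^^ j) (Pn $ i $ i) * F j $ i $ k"
      by (rule sum_single) (simp add: diag)
    finally show "(((mat_deriv ^^ j) Pn) ** F j) $ i $ k = (pderiv ^^ j) (Pn $ i $ i) * F j $ i $ k" .
  qed simp
  also have "\<dots> = act (\<lambda>j. if j \<le> M then F j $ i $ k else 0) M (Pn $ i $ i)"
    unfolding act_def by (rule sum.cong) auto
  finally show "dop_act F M Pn $ i $ k = act (\<lambda>j. if j \<le> M then F j $ i $ k else 0) M (Pn $ i $ i)" .
  have "(const_mpoly L ** Pn) $ i $ k = (\<Sum>l\<in>UNIV. [:L $ i $ l:] * Pn $ l $ k)"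
    by (simp add: matrix_matrix_mult_def const_mpoly_def)
  also have "\<dots> = [:L $ i $ k:] * Pn $ k $ k"
    by (rule sum_single) (simp add: diag)
  finally show "(const_mpoly L ** Pn) $ i $ k = smult (L $ i $ k) (Pn $ k $ k)" by simp
qed


lemma hermite_main:
  fixes b :: "'n::finite \<Rightarrow> real" and P :: "nat \<Rightarrow> 'n mpoly" and F :: "nat \<Rightarrow> 'n mpoly"
  assumes inj: "inj b" and ops: "monic_OPS UNIV (wH b) P" and dw: "in_DW P F (2*m)"
  shows "\<exists>(c::'n \<Rightarrow> complex) (q::'n \<Rightarrow> complex poly).
          (\<forall>i. q i = 0 \<or> degree (q i) < m) \<and>
          F (2*m) = diag_mpoly (\<lambda>i. smult (c i) (1 ^ m)) \<and>
          F m = diag_mpoly (\<lambda>i. smult (c i * (-2)^m) (monom 1 m) + q i) \<and>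
          (\<forall>j. m + 1 \<le> j \<and> j \<le> 2*m \<longrightarrow> (\<forall>i k. degree (F j $ i $ k) < j))"
proof -
  define Ph where "Ph k = Phi UNIV (wH b k)" for k
  define OP where "OP k = hop (complex_of_real (b k))" for k
  define mu where "mu n = - 2 * (of_nat n :: complex)" for n
  have INT: "integrable lborel (\<lambda>x. indicator UNIV x * (x^j * wH b k x))" for k j
    using int_H[of j "b k"] by (simp add: wH_def)
  have monic: "\<And>n. monic_mpoly n (P n)" using ops by (simp add: monic_OPS_def)
  have orth: "\<And>(n::nat) (l::nat) (i::'n) (j::'n). l \<noteq> n \<Longrightarrow> (\<Sum>k\<in>UNIV. Ph k (P n $ i $ k * cnjp (P l $ j $ k))) = 0"
  proof -
    fix n l :: nat and i j :: 'n assume "l \<noteq> n"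
    then have "mip UNIV (wH b) (P n) (P l) = 0" using ops by (simp add: monic_OPS_def)
    then have "mip UNIV (wH b) (P n) (P l) $ i $ j = 0" by simp
    then show "(\<Sum>k\<in>UNIV. Ph k (P n $ i $ k * cnjp (P l $ j $ k))) = 0"
      unfolding Ph_def mip_Phi[OF INT] .
  qed
  have ibp: "Ph k (pderiv r + [:2 * complex_of_real (b k), -2:] * r) = 0" for k r
  proof -
    have wHk: "wH b k = (\<lambda>x. exp (- x\<^sup>2 + 2 * b k * x))" by (rule ext) (simp add: wH_def)
    show ?thesis unfolding Ph_def wHk by (rule Phi_ibp_H) (rule mom_H)
  qed
  have struct:
    "\<And>n i k. i \<noteq> k \<Longrightarrow> P n $ i $ k = 0"
    "\<And>n i. OP i (P n $ i $ i) = smult (mu n) (P n $ i $ i)"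
  proof -
    have lin: "\<And>k. phi_lin (Ph k)" unfolding Ph_def by (rule Phi_lin)
    have pos: "r = 0" if "Ph k (r * cnjp r) = 0" for k r
      by (rule Phi_pos[where w="wH b k", OF INT]) (use that in \<open>auto simp: wH_def Ph_def\<close>)
    have symm: "\<And>k p q. Ph k (OP k p * cnjp q) = Ph k (p * cnjp (OP k q))"
      unfolding OP_def by (rule hop_symm[OF lin ibp]) simp
    have deg: "\<And>k p. degree (OP k p) \<le> degree p" unfolding OP_def by (rule hop_deg)
    have lead: "\<And>k p n. degree p \<le> n \<Longrightarrow> coeff (OP k p) n = mu n * coeff p n"
      unfolding OP_def mu_def by (rule hop_lead)
    have l1: "\<And>k a c. OP k (a - c) = OP k a - OP k c" unfolding OP_def by (rule hop_diff)
    have l2: "\<And>k u a. OP k (smult u a) = smult u (OP k a)" unfolding OP_def by (rule hop_smult)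
    note facts = monic orth lin pos symm deg lead l1 l2
    show "P n $ i $ k = 0" if "i \<noteq> k" for n i k
      using OPS_structure(1)[where P=P and Phi=Ph and OP=OP and mu=mu, OF facts that] .
    show "OP i (P n $ i $ i) = smult (mu n) (P n $ i $ i)" for n i
      using OPS_structure(2)[where P=P and Phi=Ph and OP=OP and mu=mu, OF facts] .
  qed
  obtain L where L: "\<And>n. dop_act F (2*m) (P n) = const_mpoly (L n) ** P n"
    using dw unfolding in_DW_def by metis
  define fr where "fr i k j = (if j \<le> 2*m then F j $ i $ k else 0)" for i k j
  have degP: "degree (P n $ i $ i) = n" for n i
  proof -
    have "degree (P n $ i $ i) \<le> n" "coeff (P n $ i $ i) n = 1" using monic[of n] by (simp_all add: monic_mpoly_def)
    then show ?thesis by (metis le_antisym le_degree one_neq_zero)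
  qed
  have lcP: "coeff (P n $ i $ i) n = 1" for n i using monic[of n] by (simp add: monic_mpoly_def)
  have actp: "act (fr i k) (2*m) (P n $ i $ i) = smult (L n $ i $ k) (P n $ k $ k)" for i k n
  proof -
    have e1: "dop_act F (2*m) (P n) $ i $ k = act (\<lambda>j. if j \<le> 2*m then F j $ i $ k else 0) (2*m) (P n $ i $ i)"
      by (rule DW_entry(1)) (rule struct(1))
    have e2: "(const_mpoly (L n) ** P n) $ i $ k = smult (L n $ i $ k) (P n $ k $ k)"
      by (rule DW_entry(2)) (rule struct(1))
    show ?thesis using L[of n] e1 e2 unfolding fr_def by simp
  qed
  have hz: "he (complex_of_real (b i)) (complex_of_real (b k)) (fr i k) j = 0" for i k j
    by (rule he_zero[where M = "2*m" and p = "\<lambda>n. P n $ i $ i" and pp = "\<lambda>n. P n $ k $ k" and mu = mu])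
       (use actp struct(2) degP lcP in \<open>auto simp: fr_def OP_def\<close>)
  have off: "fr i k j = 0" if "i \<noteq> k" for i k j
  proof (rule hermite_off_pair[where M = "2*m" and c = "complex_of_real (b i)" and c' = "complex_of_real (b k)"])
    show "complex_of_real (b i) \<noteq> complex_of_real (b k)" using inj that by (auto dest: injD)
    show "\<And>j. 2*m < j \<Longrightarrow> fr i k j = 0" by (simp add: fr_def)
    show "\<And>j. he (complex_of_real (b i)) (complex_of_real (b k)) (fr i k) j = 0" by (rule hz)
  qed
  define c where "c i = coeff (F (2*m) $ i $ i) 0" for i
  define q where "q i = F m $ i $ i - smult (c i * (-2)^m) (monom 1 m)" for i
  have dg: "fr i i (2*m) = [:coeff (fr i i (2*m)) 0:]"
    and dlt: "\<And>j. m < j \<Longrightarrow> degree (fr i i j) < j"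
    and dm: "degree (fr i i m) \<le> m"
    and cm: "coeff (fr i i m) m = (-2)^m * coeff (fr i i (2*m)) 0" for i
    by (rule hermite_diag_pair[of m "fr i i" "complex_of_real (b i)"]; simp add: fr_def hz)+
  have q: "q i = 0 \<or> degree (q i) < m" for i
  proof -
    have "coeff (q i) r = 0" if "m \<le> r" for r
    proof (cases "r = m")
      case True then show ?thesis using cm[of i] by (simp add: q_def c_def fr_def)
    next
      case False
      then have "m < r" using that by simp
      then show ?thesis using dm[of i] by (simp add: q_def fr_def coeff_eq_0 coeff_monom)
    qed
    then show ?thesis
      by (metis le_degree le_less_linear leading_coeff_0_iff)
  qed
  have F2: "F (2*m) = diag_mpoly (\<lambda>i. smult (c i) (1 ^ m))"
  proof -
    have "F (2*m) $ i $ k = (if i = k then smult (c i) (1^m) else 0)" for i k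
      using dg[of i] off[of i k "2*m"] by (cases "i = k") (simp_all add: fr_def c_def)
    then show ?thesis by (simp add: vec_eq_iff diag_mpoly_def)
  qed
  have Fm: "F m = diag_mpoly (\<lambda>i. smult (c i * (-2)^m) (monom 1 m) + q i)"
  proof -
    have "F m $ i $ k = (if i = k then smult (c i * (-2)^m) (monom 1 m) + q i else 0)" for i k
      using off[of i k m] by (cases "i = k") (simp_all add: fr_def q_def)
    then show ?thesis by (simp add: vec_eq_iff diag_mpoly_def)
  qed
  have Fj: "\<forall>j. m + 1 \<le> j \<and> j \<le> 2*m \<longrightarrow> (\<forall>i k. degree (F j $ i $ k) < j)"
  proof (intro allI impI)
    fix j i k assume j: "m + 1 \<le> j \<and> j \<le> 2*m"
    show "degree (F j $ i $ k) < j"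
    proof (cases "i = k")
      case True then show ?thesis using dlt[of j i] j by (simp add: fr_def)
    next
      case False then show ?thesis using off[of i k j] j by (simp add: fr_def)
    qed
  qed
  show ?thesis using q F2 Fm Fj by blast
qed

lemma laguerre_main:
  fixes a :: "'n::finite \<Rightarrow> real" and P :: "nat \<Rightarrow> 'n mpoly" and F :: "nat \<Rightarrow> 'n mpoly"
  assumes apos: "\<And>i. a i > -1" and anz: "\<And>i j. i \<noteq> j \<Longrightarrow> a i - a j \<notin> \<int>"
    and ops: "monic_OPS {0<..} (wL a) P" and dw: "in_DW P F (2*m)"
  shows "\<exists>(c::'n \<Rightarrow> complex) (q::'n \<Rightarrow> complex poly).
          (\<forall>i. q i = 0 \<or> degree (q i) < m) \<and>
          F (2*m) = diag_mpoly (\<lambda>i. smult (c i) ([:0, 1:] ^ m)) \<and>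
          F m = diag_mpoly (\<lambda>i. smult (c i * (-1)^m) (monom 1 m) + q i) \<and>
          (\<forall>j. m + 1 \<le> j \<and> j \<le> 2*m \<longrightarrow> (\<forall>i k. degree (F j $ i $ k) < j))"
proof -
  define Ph where "Ph k = Phi {0<..} (wL a k)" for k
  define OP where "OP k = lop (complex_of_real (a k))" for k
  define mu where "mu n = - (of_nat n :: complex)" for n
  have INT: "integrable lborel (\<lambda>x. indicator {0<..} x * (x^j * wL a k x))" for k j
    using int_L[OF apos[of k], of j] by (simp add: wL_def)
  have monic: "\<And>n. monic_mpoly n (P n)" using ops by (simp add: monic_OPS_def)
  have orth: "\<And>(n::nat) (l::nat) (i::'n) (j::'n). l \<noteq> n \<Longrightarrow> (\<Sum>k\<in>UNIV. Ph k (P n $ i $ k * cnjp (P l $ j $ k))) = 0"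
  proof -
    fix n l :: nat and i j :: 'n assume "l \<noteq> n"
    then have "mip {0<..} (wL a) (P n) (P l) = 0" using ops by (simp add: monic_OPS_def)
    then have "mip {0<..} (wL a) (P n) (P l) $ i $ j = 0" by simp
    then show "(\<Sum>k\<in>UNIV. Ph k (P n $ i $ k * cnjp (P l $ j $ k))) = 0"
      unfolding Ph_def mip_Phi[OF INT] .
  qed
  have ibp: "Ph k ([:complex_of_real (a k) + 1, -1:] * r + [:0, 1:] * pderiv r) = 0" for k r
  proof -
    have wLk: "wL a k = (\<lambda>x. exp (- x) * x powr a k)" by (rule ext) (simp add: wL_def)
    show ?thesis unfolding Ph_def wLk by (rule Phi_ibp_L) (rule mom_L[OF apos])
  qed
  have struct:
    "\<And>n i k. i \<noteq> k \<Longrightarrow> P n $ i $ k = 0"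
    "\<And>n i. OP i (P n $ i $ i) = smult (mu n) (P n $ i $ i)"
  proof -
    have lin: "\<And>k. phi_lin (Ph k)" unfolding Ph_def by (rule Phi_lin)
    have pos: "r = 0" if "Ph k (r * cnjp r) = 0" for k r
      by (rule Phi_pos[where w="wL a k", OF INT]) (use that in \<open>auto simp: wL_def Ph_def\<close>)
    have symm: "\<And>k p q. Ph k (OP k p * cnjp q) = Ph k (p * cnjp (OP k q))"
      unfolding OP_def by (rule lop_symm[OF lin ibp]) simp
    have deg: "\<And>k p. degree (OP k p) \<le> degree p" unfolding OP_def by (rule lop_deg)
    have lead: "\<And>k p n. degree p \<le> n \<Longrightarrow> coeff (OP k p) n = mu n * coeff p n"
      unfolding OP_def mu_def by (rule lop_lead)
    have l1: "\<And>k a c. OP k (a - c) = OP k a - OP k c" unfolding OP_def by (rule lop_diff)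
    have l2: "\<And>k u a. OP k (smult u a) = smult u (OP k a)" unfolding OP_def by (rule lop_smult)
    note facts = monic orth lin pos symm deg lead l1 l2
    show "P n $ i $ k = 0" if "i \<noteq> k" for n i k
      using OPS_structure(1)[where P=P and Phi=Ph and OP=OP and mu=mu, OF facts that] .
    show "OP i (P n $ i $ i) = smult (mu n) (P n $ i $ i)" for n i
      using OPS_structure(2)[where P=P and Phi=Ph and OP=OP and mu=mu, OF facts] .
  qed
  obtain L where L: "\<And>n. dop_act F (2*m) (P n) = const_mpoly (L n) ** P n"
    using dw unfolding in_DW_def by metis
  define fr where "fr i k j = (if j \<le> 2*m then F j $ i $ k else 0)" for i k j
  have degP: "degree (P n $ i $ i) = n" for n i
  proof -
    have "degree (P n $ i $ i) \<le> n" "coeff (P n $ i $ i) n = 1" using monic[of n] by (simp_all add: monic_mpoly_def)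
    then show ?thesis by (metis le_antisym le_degree one_neq_zero)
  qed
  have lcP: "coeff (P n $ i $ i) n = 1" for n i using monic[of n] by (simp add: monic_mpoly_def)
  have actp: "act (fr i k) (2*m) (P n $ i $ i) = smult (L n $ i $ k) (P n $ k $ k)" for i k n
  proof -
    have e1: "dop_act F (2*m) (P n) $ i $ k = act (\<lambda>j. if j \<le> 2*m then F j $ i $ k else 0) (2*m) (P n $ i $ i)"
      by (rule DW_entry(1)) (rule struct(1))
    have e2: "(const_mpoly (L n) ** P n) $ i $ k = smult (L n $ i $ k) (P n $ k $ k)"
      by (rule DW_entry(2)) (rule struct(1))
    show ?thesis using L[of n] e1 e2 unfolding fr_def by simp
  qed
  have hz: "le (complex_of_real (a i)) (complex_of_real (a k)) (fr i k) j = 0" for i k j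
    by (rule le_zero[where M = "2*m" and p = "\<lambda>n. P n $ i $ i" and pp = "\<lambda>n. P n $ k $ k" and mu = mu])
       (use actp struct(2) degP lcP in \<open>auto simp: fr_def OP_def\<close>)
  have off: "fr i k j = 0" if "i \<noteq> k" for i k j
  proof (rule laguerre_off_pair[where M = "2*m" and c = "complex_of_real (a i)" and c' = "complex_of_real (a k)"])
    show "\<And>z::int. complex_of_real (a k) - complex_of_real (a i) \<noteq> of_int z"
    proof
      fix z :: int assume "complex_of_real (a k) - complex_of_real (a i) = of_int z"
      then have "complex_of_real (a k - a i) = complex_of_real (of_int z)" by simp
      then have "a k - a i = of_int z" by (simp only: of_real_eq_iff)
      then have "a k - a i \<in> \<int>" by simp
      then show False using anz[of k i] that by auto
    qed
    show "\<And>j. 2*m < j \<Longrightarrow> fr i k j = 0" by (simp add: fr_def)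
    show "\<And>j. le (complex_of_real (a i)) (complex_of_real (a k)) (fr i k) j = 0" by (rule hz)
  qed
  define c where "c i = coeff (F (2*m) $ i $ i) m" for i
  define q where "q i = F m $ i $ i - smult (c i * (-1)^m) (monom 1 m)" for i
  have dg: "fr i i (2*m) = monom (coeff (fr i i (2*m)) m) m"
    and dlt: "\<And>j. m < j \<Longrightarrow> degree (fr i i j) < j"
    and dm: "degree (fr i i m) \<le> m"
    and cm: "coeff (fr i i m) m = (-1)^m * coeff (fr i i (2*m)) m" for i
    by (rule laguerre_diag_pair[of m "fr i i" "complex_of_real (a i)"]; simp add: fr_def hz)+
  have q: "q i = 0 \<or> degree (q i) < m" for i
  proof -
    have "coeff (q i) r = 0" if "m \<le> r" for r
    proof (cases "r = m")
      case True then show ?thesis using cm[of i] by (simp add: q_def c_def fr_def)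
    next
      case False
      then have "m < r" using that by simp
      then show ?thesis using dm[of i] by (simp add: q_def fr_def coeff_eq_0 coeff_monom)
    qed
    then show ?thesis
      by (metis le_degree le_less_linear leading_coeff_0_iff)
  qed
  have F2: "F (2*m) = diag_mpoly (\<lambda>i. smult (c i) ([:0, 1:] ^ m))"
  proof -
    have "F (2*m) $ i $ k = (if i = k then smult (c i) ([:0, 1:] ^ m) else 0)" for i k
      using dg[of i] off[of i k "2*m"] by (cases "i = k") (simp_all add: fr_def c_def monom_altdef)
    then show ?thesis by (simp add: vec_eq_iff diag_mpoly_def)
  qed
  have Fm: "F m = diag_mpoly (\<lambda>i. smult (c i * (-1)^m) (monom 1 m) + q i)"
  proof -
    have "F m $ i $ k = (if i = k then smult (c i * (-1)^m) (monom 1 m) + q i else 0)" for i k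
      using off[of i k m] by (cases "i = k") (simp_all add: fr_def q_def)
    then show ?thesis by (simp add: vec_eq_iff diag_mpoly_def)
  qed
  have Fj: "\<forall>j. m + 1 \<le> j \<and> j \<le> 2*m \<longrightarrow> (\<forall>i k. degree (F j $ i $ k) < j)"
  proof (intro allI impI)
    fix j i k assume j: "m + 1 \<le> j \<and> j \<le> 2*m"
    show "degree (F j $ i $ k) < j"
    proof (cases "i = k")
      case True then show ?thesis using dlt[of j i] j by (simp add: fr_def)
    next
      case False then show ?thesis using off[of i k j] j by (simp add: fr_def)
    qed
  qed
  show ?thesis using q F2 Fm Fj by blast
qed


theorem lemma3p9:
  shows
  "(\<forall>(b::'n::finite \<Rightarrow> real) P F (m::nat).
      inj b \<and> monic_OPS UNIV (wH b) P \<and> in_DW P F (2*m) \<and> F (2*m) \<noteq> 0 \<longrightarrow>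
      (\<exists>(c::'n \<Rightarrow> complex) (q::'n \<Rightarrow> complex poly).
          (\<forall>i. q i = 0 \<or> degree (q i) < m) \<and>
          F (2*m) = diag_mpoly (\<lambda>i. smult (c i) (1 ^ m)) \<and>
          F m = diag_mpoly (\<lambda>i. smult (c i * (-2)^m) (monom 1 m) + q i) \<and>
          (\<forall>j. m + 1 \<le> j \<and> j \<le> 2*m \<longrightarrow> (\<forall>i k. degree (F j $ i $ k) < j))))
   \<and>
   (\<forall>(a::'n \<Rightarrow> real) P F (m::nat).
      (\<forall>i. a i > -1) \<and> (\<forall>i j. i \<noteq> j \<longrightarrow> a i - a j \<notin> \<int>) \<and>
      monic_OPS {0<..} (wL a) P \<and> in_DW P F (2*m) \<and> F (2*m) \<noteq> 0 \<longrightarrow>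
      (\<exists>(c::'n \<Rightarrow> complex) (q::'n \<Rightarrow> complex poly).
          (\<forall>i. q i = 0 \<or> degree (q i) < m) \<and>
          F (2*m) = diag_mpoly (\<lambda>i. smult (c i) ([:0, 1:] ^ m)) \<and>
          F m = diag_mpoly (\<lambda>i. smult (c i * (-1)^m) (monom 1 m) + q i) \<and>
          (\<forall>j. m + 1 \<le> j \<and> j \<le> 2*m \<longrightarrow> (\<forall>i k. degree (F j $ i $ k) < j))))"
proof (intro conjI allI impI)
  fix b :: "'n::finite \<Rightarrow> real" and P F and m :: nat
  assume h: "inj b \<and> monic_OPS UNIV (wH b) P \<and> in_DW P F (2*m) \<and> F (2*m) \<noteq> 0"
  show "\<exists>(c::'n \<Rightarrow> complex) (q::'n \<Rightarrow> complex poly).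
          (\<forall>i. q i = 0 \<or> degree (q i) < m) \<and>
          F (2*m) = diag_mpoly (\<lambda>i. smult (c i) (1 ^ m)) \<and>
          F m = diag_mpoly (\<lambda>i. smult (c i * (-2)^m) (monom 1 m) + q i) \<and>
          (\<forall>j. m + 1 \<le> j \<and> j \<le> 2*m \<longrightarrow> (\<forall>i k. degree (F j $ i $ k) < j))"
    by (rule hermite_main) (use h in auto)
next
  fix a :: "'n::finite \<Rightarrow> real" and P F and m :: nat
  assume h: "(\<forall>i. a i > -1) \<and> (\<forall>i j. i \<noteq> j \<longrightarrow> a i - a j \<notin> \<int>) \<and>
      monic_OPS {0<..} (wL a) P \<and> in_DW P F (2*m) \<and> F (2*m) \<noteq> 0"
  show "\<exists>(c::'n \<Rightarrow> complex) (q::'n \<Rightarrow> complex poly).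
          (\<forall>i. q i = 0 \<or> degree (q i) < m) \<and>
          F (2*m) = diag_mpoly (\<lambda>i. smult (c i) ([:0, 1:] ^ m)) \<and>
          F m = diag_mpoly (\<lambda>i. smult (c i * (-1)^m) (monom 1 m) + q i) \<and>
          (\<forall>j. m + 1 \<le> j \<and> j \<le> 2*m \<longrightarrow> (\<forall>i k. degree (F j $ i $ k) < j))"
    by (rule laguerre_main) (use h in auto)
qed

end
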